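(* Under the standing assumptions in the context, for any fixed $\mu>0$ and $h\ge0$, the RDE-CUSUM policy $\bar\Psi_{\mathrm{RDC}}(A,\mu,h)$ (defined in the context) satisfies $$\sup_{G\in\mathcal{G}}\mathsf{WADD}^{G}(\bar\Psi_{\mathrm{RDC}}(A,\mu,h))\ \le\ \frac{A}{D_{KL}(\bar g\,\|\,f)}\,(1+o(1)),$$ where the $o(1)$ term goes to zero as $A\to\infty$.
   Context: Observation model: a sequence $\{X_n\}_{n\ge1}$, conditionally independent given an unknown deterministic change point $\nu\in\{1,2,\dots\}\cup\{\infty\}$, with $X_n$ having density $f$ for $n<\nu$ and density $g$ (distribution $G$) for $n\ge\nu$, where $G$ is unknown but belongs to a known family $\mathcal{G}$. $\mathsf{P}^G_k,\mathsf{E}^G_k$ denote probability and expectation when $\nu=k$ with post-change law $G$. Policies: $M_n\in\{0,1\}$ indicates whether $X_n$ is used; information $\mathscr{I}_n=[M_1,\dots,M_n,X_1^{(M_1)},\dots,X_n^{(M_n)}]$ with $X_i^{(M_i)}=X_i$ if $M_i=1$ and absent otherwise ($\mathscr{I}_0=\emptyset$); $\tau$ is a stopping time for the filtration generated by $\{\mathscr{I}_n\}$. $\mathsf{WADD}^G(\Psi)=\sup_{k\ge1}\operatorname{ess\,sup}\mathsf{E}^G_k[(\tau-k+1)^+\mid\mathscr{I}_{k-1}]$. Least favorable law: $\bar G\in\mathcal{G}$ with density $\bar g$ such that for every $G\in\mathcal{G}$ and all $t\in\mathbb{R}$, $\mathsf{P}_{X\sim G}(\log(\bar g(X)/f(X))\ge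 t)\ge\mathsf{P}_{X\sim\bar G}(\log(\bar g(X)/f(X))\ge t)$. Standing assumptions: such $\bar g$ exists, and all likelihood ratios involved are continuous with finite positive moments up to second order. $D_{KL}(\bar g\|f)=\int\bar g(x)\log\frac{\bar g(x)}{f(x)}dx$. RDE-CUSUM policy $\bar\Psi_{\mathrm{RDC}}(A,\mu,h)$, with $A>0$, $\mu>0$, $h\ge0$: set $\bar D_0=0$. For $n\ge0$: $\bar M_{n+1}=1$ if $\bar D_n\ge0$ and $\bar M_{n+1}=0$ if $\bar D_n<0$. If $\bar M_{n+1}=1$ then $\bar D_{n+1}=\max\{\bar D_n+\log(\bar g(X_{n+1})/f(X_{n+1})),\,-h\}$; if $\bar M_{n+1}=0$ then $\bar D_{n+1}=\min\{\bar D_n+\mu,0\}$. Stop at $\bar\tau_{\mathrm{rdc}}=\inf\{n\ge1:\bar D_n\ge A\}$. *)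

theory Defs
  imports "HOL-Probability.Probability"
begin

text \<open>Observations: a sample path is a function x :: nat => real, with
  X_n = x (n - 1) for n >= 1 (i.e. x i is the (i+1)-th observation).\<close>

definition llr :: "(real \<Rightarrow> real) \<Rightarrow> (real \<Rightarrow> real) \<Rightarrow> real \<Rightarrow> real" where
  "llr gb f x = ln (gb x / f x)"

definition law :: "(real \<Rightarrow> real) \<Rightarrow> real measure" where
  "law g = density lborel (\<lambda>x. ennreal (g x))"

definition is_density :: "(real \<Rightarrow> real) \<Rightarrow> bool" where
  "is_density g \<longleftrightarrow> g \<in> borel_measurable borel \<and> (\<forall>x. 0 \<le> g x)
      \<and> (\<integral>\<^sup>+ x. ennreal (g x) \<partial>lborel) = 1"

text \<open>The RDE-CUSUM statistic: rdc_D gb f mu h x n = Dbar_n.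
  Sampling decision: Mbar_{n+1} = 1 iff Dbar_n >= 0; X_{n+1} = x n.\<close>
fun rdc_D :: "(real \<Rightarrow> real) \<Rightarrow> (real \<Rightarrow> real) \<Rightarrow> real \<Rightarrow> real \<Rightarrow> (nat \<Rightarrow> real) \<Rightarrow> nat \<Rightarrow> real" where
  "rdc_D gb f mu h x 0 = 0"
| "rdc_D gb f mu h x (Suc n) =
     (if rdc_D gb f mu h x n \<ge> 0
      then max (rdc_D gb f mu h x n + llr gb f (x n)) (- h)
      else min (rdc_D gb f mu h x n + mu) 0)"

text \<open>M_{n+1} (for n >= 0), as a boolean.\<close>
definition rdc_M :: "(real \<Rightarrow> real) \<Rightarrow> (real \<Rightarrow> real) \<Rightarrow> real \<Rightarrow> real \<Rightarrow> (nat \<Rightarrow> real) \<Rightarrow> nat \<Rightarrow> bool" where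
  "rdc_M gb f mu h x n \<longleftrightarrow> rdc_D gb f mu h x n \<ge> 0"

definition rdc_tau :: "(real \<Rightarrow> real) \<Rightarrow> (real \<Rightarrow> real) \<Rightarrow> real \<Rightarrow> real \<Rightarrow> real \<Rightarrow> (nat \<Rightarrow> real) \<Rightarrow> enat" where
  "rdc_tau gb f A mu h x =
     (if \<exists>n\<ge>1. rdc_D gb f mu h x n \<ge> A
      then enat (LEAST n. n \<ge> 1 \<and> rdc_D gb f mu h x n \<ge> A) else \<infinity>)"

definition delay :: "enat \<Rightarrow> nat \<Rightarrow> ennreal" where
  "delay t k = (case t of enat n \<Rightarrow> of_nat (n + 1 - k) | \<infinity> \<Rightarrow> \<infinity>)"

text \<open>P_k^G: change point nu = k, X_n ~ f for n < k and X_n ~ g for n >= k.\<close>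
definition Pk :: "(real \<Rightarrow> real) \<Rightarrow> (real \<Rightarrow> real) \<Rightarrow> nat \<Rightarrow> (nat \<Rightarrow> real) measure" where
  "Pk f g k = PiM UNIV (\<lambda>i. if i + 1 < k then law f else law g)"

text \<open>Information I_m = [M_1..M_m, X_i^{(M_i)}, i <= m], encoded as the map
  x |-> (lambda i. if i < m then (M_{i+1}, if M_{i+1} then X_{i+1} else 0) else (False, 0)).\<close>
definition info_space :: "(nat \<Rightarrow> bool \<times> real) measure" where
  "info_space = PiM UNIV (\<lambda>_. count_space UNIV \<Otimes>\<^sub>M borel)"

definition rdc_info :: "(real \<Rightarrow> real) \<Rightarrow> (real \<Rightarrow> real) \<Rightarrow> real \<Rightarrow> real \<Rightarrow> nat \<Rightarrow> (nat \<Rightarrow> real) \<Rightarrow> nat \<Rightarrow> bool \<times> real" where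
  "rdc_info gb f mu h m x = (\<lambda>i. if i < m
       then (rdc_M gb f mu h x i, if rdc_M gb f mu h x i then x i else 0) else (False, 0))"

definition info_alg :: "(nat \<Rightarrow> real) measure \<Rightarrow> (real \<Rightarrow> real) \<Rightarrow> (real \<Rightarrow> real) \<Rightarrow> real \<Rightarrow> real \<Rightarrow> nat \<Rightarrow> (nat \<Rightarrow> real) measure" where
  "info_alg P gb f mu h m = vimage_algebra (space P) (rdc_info gb f mu h m) info_space"

definition WADD_rdc :: "(real \<Rightarrow> real) \<Rightarrow> (real \<Rightarrow> real) \<Rightarrow> (real \<Rightarrow> real) \<Rightarrow> real \<Rightarrow> real \<Rightarrow> real \<Rightarrow> ennreal" where
  "WADD_rdc f gb g A mu h =
     (SUP k\<in>{1..}. esssup (Pk f g k)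
        (nn_cond_exp (Pk f g k) (info_alg (Pk f g k) gb f mu h (k - 1))
           (\<lambda>x. delay (rdc_tau gb f A mu h x) k)))"

end

theory Submission
  imports Defs
begin

lemma indep_step:
  fixes M :: "nat \<Rightarrow> real measure" and H :: "(nat \<Rightarrow> real) \<Rightarrow> real \<Rightarrow> real"
  assumes prob: "\<And>i. prob_space (M i)"
    and Hm: "(\<lambda>(y, X). H X y) \<in> borel_measurable (M n \<Otimes>\<^sub>M PiM UNIV M)"
    and Hb: "\<And>X y. \<bar>H X y\<bar> \<le> B"
    and Hloc: "\<And>X X' y. (\<forall>i<n. X i = X' i) \<Longrightarrow> H X y = H X' y"
  shows "(\<integral>X. H X (X n) \<partial>PiM UNIV M) = (\<integral>X. (\<integral>y. H X y \<partial>M n) \<partial>PiM UNIV M)"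
proof -
  let ?P = "PiM UNIV M"
  interpret Pp: prob_space ?P by (intro prob_space_PiM prob)
  interpret Mn: prob_space "M n" by (rule prob)
  interpret pp: pair_prob_space "M n" ?P by unfold_locales
  have eq: "distr (M n \<Otimes>\<^sub>M ?P) ?P (\<lambda>(y, X). X(n := y)) = ?P"
    using distr_pair_PiM_eq_PiM[of UNIV M n] prob by (simp only: insert_UNIV)
  have mupd: "(\<lambda>(y, X). X(n := y)) \<in> (M n \<Otimes>\<^sub>M ?P) \<rightarrow>\<^sub>M ?P"
  proof -
    have "(\<lambda>z i. (\<lambda>i (y, X). if i = n then y else X i) i z) \<in> (M n \<Otimes>\<^sub>M ?P) \<rightarrow>\<^sub>M ?P"
    proof (rule measurable_PiM_single')
      fix i :: nat
      show "(\<lambda>(y, X). if i = n then y else X i) \<in> (M n \<Otimes>\<^sub>M ?P) \<rightarrow>\<^sub>M M i"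
        by (cases "i = n") (simp_all add: measurable_fst'' measurable_snd'' measurable_component_singleton split_beta')
    qed (auto simp: space_pair_measure space_PiM)
    moreover have "(\<lambda>z i. (\<lambda>i (y, X). if i = n then y else X i) i z) = (\<lambda>(y, X). X(n := y))"
      by (auto simp: fun_eq_iff)
    ultimately show ?thesis by metis
  qed
  have mpair: "(\<lambda>X. (X n, X)) \<in> ?P \<rightarrow>\<^sub>M (M n \<Otimes>\<^sub>M ?P)"
    by (intro measurable_Pair measurable_component_singleton measurable_ident_sets) auto
  have m1: "(\<lambda>X. H X (X n)) \<in> borel_measurable ?P"
    using measurable_comp[OF mpair Hm] by (simp add: comp_def)
  have "(\<integral>X. H X (X n) \<partial>?P) = (\<integral>X. H X (X n) \<partial>distr (M n \<Otimes>\<^sub>M ?P) ?P (\<lambda>(y, X). X(n := y)))"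
    by (subst eq) (rule refl)
  also have "\<dots> = (\<integral>z. (\<lambda>X. H X (X n)) ((\<lambda>(y, X). X(n := y)) z) \<partial>(M n \<Otimes>\<^sub>M ?P))"
    by (rule integral_distr[OF mupd m1])
  also have "\<dots> = (\<integral>z. (\<lambda>(y, X). H X y) z \<partial>(M n \<Otimes>\<^sub>M ?P))"
    by (intro Bochner_Integration.integral_cong refl) (auto intro!: Hloc)
  also have "\<dots> = (\<integral>X. (\<integral>y. H X y \<partial>M n) \<partial>?P)"
  proof -
    have "integrable (M n \<Otimes>\<^sub>M ?P) (\<lambda>(y, X). H X y)"
      by (intro pp.integrable_const_bound[where B=B] AE_I2) (use Hm Hb in \<open>auto split: prod.splits\<close>)
    from pp.integral_snd[of "\<lambda>y X. H X y", OF this] show ?thesis by simp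
  qed
  finally show ?thesis .
qed
lemma indep_step_int:
  fixes M :: "nat \<Rightarrow> real measure" and H :: "(nat \<Rightarrow> real) \<Rightarrow> real \<Rightarrow> real"
  assumes prob: "\<And>i. prob_space (M i)"
    and Hm: "(\<lambda>(y, X). H X y) \<in> borel_measurable (M n \<Otimes>\<^sub>M PiM UNIV M)"
    and Hb: "\<And>X y. \<bar>H X y\<bar> \<le> B"
  shows "integrable (PiM UNIV M) (\<lambda>X. (\<integral>y. H X y \<partial>M n))"
proof -
  let ?P = "PiM UNIV M"
  interpret Pp: prob_space ?P by (intro prob_space_PiM prob)
  interpret Mn: prob_space "M n" by (rule prob)
  interpret pp: pair_prob_space "M n" ?P by unfold_locales
  have "integrable (M n \<Otimes>\<^sub>M ?P) (\<lambda>(y, X). H X y)"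
    by (intro pp.integrable_const_bound[where B=B] AE_I2) (use Hm Hb in \<open>auto split: prod.splits\<close>)
  from pp.integrable_snd[of "\<lambda>y X. H X y", OF this] show ?thesis by simp
qed

lemma comp_meas:
  assumes "\<And>i. sets (M i) = sets (borel :: real measure)"
  shows "(\<lambda>x. x n) \<in> borel_measurable (PiM UNIV M)"
proof -
  have "(\<lambda>x. x n) \<in> PiM UNIV M \<rightarrow>\<^sub>M M n" by (rule measurable_component_singleton) simp
  then show ?thesis using assms measurable_cong_sets by blast
qed

lemma llr_meas:
  assumes "f \<in> borel_measurable borel" "gb \<in> borel_measurable borel"
  shows "llr gb f \<in> borel_measurable borel"
  unfolding llr_def using assms by measurable

lemma D_ge:
  assumes "h \<ge> 0" "mu > 0"
  shows "rdc_D gb f mu h x n \<ge> - h"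
  using assms by (induction n) auto

lemma D_loc:
  "(\<forall>i<n. x i = x' i) \<Longrightarrow> rdc_D gb f mu h x n = rdc_D gb f mu h x' n"
  by (induction n) auto

lemma D_meas:
  assumes M: "\<And>i. sets (M i) = sets (borel :: real measure)"
    and l: "llr gb f \<in> borel_measurable borel"
  shows "(\<lambda>x. rdc_D gb f mu h x n) \<in> borel_measurable (PiM UNIV M)"
proof (induction n)
  case 0
  then show ?case by simp
next
  case (Suc n)
  have c[measurable]: "(\<lambda>x. x n) \<in> borel_measurable (PiM UNIV M)" by (rule comp_meas[OF M])
  have l'[measurable]: "(\<lambda>x. llr gb f (x n)) \<in> borel_measurable (PiM UNIV M)"
    using measurable_compose[OF c l] .
  note Suc[measurable]
  show ?case by simp measurable
qed

lemma space_PiM_UNIV: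
  assumes M: "\<And>i. sets (M i) = sets (borel :: real measure)"
  shows "space (PiM UNIV M) = UNIV"
proof -
  have "space (M i) = UNIV" for i using sets_eq_imp_space_eq[OF M[of i]] by simp
  then show ?thesis by (simp add: space_PiM)
qed

definition alive :: "(real \<Rightarrow> real) \<Rightarrow> (real \<Rightarrow> real) \<Rightarrow> real \<Rightarrow> real \<Rightarrow> real \<Rightarrow> nat \<Rightarrow> (nat \<Rightarrow> real) set" where
  "alive gb f A mu h n = {x. \<forall>m. 1 \<le> m \<and> m \<le> n \<longrightarrow> rdc_D gb f mu h x m < A}"

lemma alive_meas:
  assumes M: "\<And>i. sets (M i) = sets (borel :: real measure)"
    and l: "llr gb f \<in> borel_measurable borel"
  shows "alive gb f A mu h n \<in> sets (PiM UNIV M)"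
proof -
  have "alive gb f A mu h n = {x \<in> space (PiM UNIV M). \<forall>m\<in>{1..n}. rdc_D gb f mu h x m < A}"
    by (auto simp: alive_def space_PiM_UNIV[OF M])
  also have "\<dots> \<in> sets (PiM UNIV M)"
  proof -
    have [measurable]: "\<And>m. (\<lambda>x. rdc_D gb f mu h x m) \<in> borel_measurable (PiM UNIV M)"
      by (rule D_meas[OF M l])
    show ?thesis by measurable
  qed
  finally show ?thesis .
qed

lemma alive_loc:
  "(\<forall>i<n. x i = x' i) \<Longrightarrow> x \<in> alive gb f A mu h n \<longleftrightarrow> x' \<in> alive gb f A mu h n"
proof -
  assume a: "\<forall>i<n. x i = x' i"
  have "rdc_D gb f mu h x m = rdc_D gb f mu h x' m" if "m \<le> n" for m
    using a that by (intro D_loc) auto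
  then show ?thesis unfolding alive_def by auto
qed

lemma alive_mono: "m \<le> n \<Longrightarrow> x \<in> alive gb f A mu h n \<Longrightarrow> x \<in> alive gb f A mu h m"
  unfolding alive_def by auto

lemma alive_lt: "A > 0 \<Longrightarrow> x \<in> alive gb f A mu h n \<Longrightarrow> rdc_D gb f mu h x n < A"
  unfolding alive_def by (cases n) auto

definition phat :: "real \<Rightarrow> real \<Rightarrow> real \<Rightarrow> real \<Rightarrow> real" where
  "phat a gam B y = y / a - gam * (max (B - y) 0)\<^sup>2"

lemma phat_mono:
  assumes "a > 0" "gam \<ge> 0" "y \<le> z"
  shows "phat a gam B y \<le> phat a gam B z"
proof -
  have "(max (B - z) 0)\<^sup>2 \<le> (max (B - y) 0)\<^sup>2"
    using assms by (intro power_mono) auto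
  then have "gam * (max (B - z) 0)\<^sup>2 \<le> gam * (max (B - y) 0)\<^sup>2"
    using assms by (intro mult_left_mono) auto
  moreover have "y / a \<le> z / a" using assms by (simp add: divide_right_mono)
  ultimately show ?thesis unfolding phat_def by linarith
qed

lemma sq_aux: "(max (u - t) 0)\<^sup>2 \<le> (max u 0 - t)\<^sup>2" for u t :: real
proof (cases "u - t \<le> 0")
  case True then show ?thesis by simp
next
  case False
  show ?thesis
  proof (cases "u \<ge> 0")
    case True then show ?thesis using False by simp
  next
    case F2: False
    then have "max u 0 - t = - t" by simp
    moreover have "(u - t)\<^sup>2 \<le> (-t)\<^sup>2" using False F2
      by (intro power_mono) auto
    ultimately show ?thesis using False by simp
  qed
qed

lemma phat_taylor:
  assumes "gam \<ge> 0"
  shows "phat a gam B (d + t) \<ge> phat a gam B d + (1 / a + 2 * gam * max (B - d) 0) * t - gam * t\<^sup>2"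
proof -
  have "(max (B - d - t) 0)\<^sup>2 \<le> (max (B - d) 0 - t)\<^sup>2" using sq_aux[of "B - d" t] by simp
  then have "gam * (max (B - d - t) 0)\<^sup>2 \<le> gam * (max (B - d) 0 - t)\<^sup>2"
    using assms by (intro mult_left_mono) auto
  moreover have "(max (B - d) 0 - t)\<^sup>2 = (max (B - d) 0)\<^sup>2 - 2 * max (B - d) 0 * t + t\<^sup>2"
    by (simp add: power2_eq_square algebra_simps)
  ultimately show ?thesis unfolding phat_def
    by (simp add: algebra_simps add_divide_distrib diff_divide_distrib)
qed

lemma phat_neg:
  assumes "a > 0" "gam \<ge> 0" "B \<ge> 0" "y < 0"
  shows "phat a gam B y \<le> - gam * B\<^sup>2"
proof -
  have "B\<^sup>2 \<le> (max (B - y) 0)\<^sup>2" using assms by (intro power_mono) auto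
  then have "gam * B\<^sup>2 \<le> gam * (max (B - y) 0)\<^sup>2" using assms by (intro mult_left_mono) auto
  moreover have "y / a < 0" using assms by (simp add: divide_neg_pos)
  ultimately show ?thesis unfolding phat_def by linarith
qed

lemma phat_ge:
  assumes "a > 0" "gam \<ge> 0" "B \<ge> 0" "y \<ge> 0"
  shows "phat a gam B y \<ge> - gam * B\<^sup>2"
proof -
  have "phat a gam B 0 \<le> phat a gam B y" using assms by (intro phat_mono) auto
  moreover have "phat a gam B 0 = - gam * B\<^sup>2" using assms by (simp add: phat_def)
  ultimately show ?thesis by simp
qed

lemma phat_le:
  assumes "gam \<ge> 0"
  shows "phat a gam B y \<le> y / a"
  using assms unfolding phat_def by simp

definition rho :: "real \<Rightarrow> real \<Rightarrow> real \<Rightarrow> real \<Rightarrow> real \<Rightarrow> (real \<Rightarrow> real) \<Rightarrow> real \<Rightarrow> real \<Rightarrow> real" where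
  "rho a gam B C L lf d y =
     (if d + min (lf y) L \<ge> 0 then phat a gam B (d + min (lf y) L) else - gam * B\<^sup>2 - C)"

lemma rho_bound:
  assumes "a > 0" "gam \<ge> 0" "B \<ge> 0" "C \<ge> 0" "L \<ge> 0" "d \<ge> 0"
  shows "\<bar>rho a gam B C L lf d y\<bar> \<le> (d + L) / a + gam * B\<^sup>2 + C"
proof (cases "d + min (lf y) L \<ge> 0")
  case True
  have "phat a gam B (d + min (lf y) L) \<le> (d + min (lf y) L) / a" by (rule phat_le) (use assms in auto)
  also have "\<dots> \<le> (d + L) / a" using assms by (intro divide_right_mono) auto
  finally have 1: "phat a gam B (d + min (lf y) L) \<le> (d + L) / a" .
  have 2: "phat a gam B (d + min (lf y) L) \<ge> - gam * B\<^sup>2" using True assms by (intro phat_ge) auto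
  have eq: "rho a gam B C L lf d y = phat a gam B (d + min (lf y) L)" using True by (simp add: rho_def)
  have "gam * B\<^sup>2 \<ge> 0" "(d + L) / a \<ge> 0" using assms by auto
  then show ?thesis using 1 2 assms(4) unfolding eq abs_le_iff by linarith
next
  case False
  have eq: "rho a gam B C L lf d y = - gam * B\<^sup>2 - C" using False by (simp add: rho_def)
  have "gam * B\<^sup>2 \<ge> 0" "(d + L) / a \<ge> 0" using assms by auto
  then show ?thesis using assms(4) unfolding eq abs_le_iff by linarith
qed

lemma rho_pointwise:
  assumes "a > 0" "gam \<ge> 0" "B \<ge> 0" "C \<ge> 0" "L \<ge> 0" "d \<ge> 0"
  shows "rho a gam B C L lf d y \<ge> phat a gam B d + (1 / a + 2 * gam * max (B - d) 0) * min (lf y) L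
            - gam * (min (lf y) L)\<^sup>2 - C * indicator {y. lf y < - d} y"
proof (cases "d + min (lf y) L \<ge> 0")
  case True
  have "C * indicator {y. lf y < - d} y \<ge> 0" using assms by simp
  then show ?thesis using True phat_taylor[OF assms(2), where a=a and B=B and d=d and t="min (lf y) L"] unfolding rho_def by simp
next
  case False
  then have "lf y < - d" using assms by auto
  have "phat a gam B (d + min (lf y) L) \<le> - gam * B\<^sup>2" using False assms by (intro phat_neg) auto
  then show ?thesis using False \<open>lf y < - d\<close> phat_taylor[OF assms(2), where a=a and B=B and d=d and t="min (lf y) L"]
    unfolding rho_def by simp
qed

lemma rho_int:
  assumes N: "prob_space N" and lm: "lf \<in> borel_measurable N"
    and i1: "integrable N (\<lambda>y. min (lf y) L)" and i2: "integrable N (\<lambda>y. (min (lf y) L)\<^sup>2)"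
    and pars: "a > 0" "gam \<ge> 0" "B \<ge> 0" "C \<ge> 0" "L \<ge> 0" "d \<ge> 0"
    and m: "m \<le> (\<integral>y. min (lf y) L \<partial>N)" and S: "(\<integral>y. (min (lf y) L)\<^sup>2 \<partial>N) \<le> S"
  shows "(\<integral>y. rho a gam B C L lf d y \<partial>N) \<ge>
     phat a gam B d + (1 / a + 2 * gam * max (B - d) 0) * m - gam * S - C * measure N {y \<in> space N. lf y < - d}"
proof -
  interpret N: prob_space N by (rule N)
  let ?c = "1 / a + 2 * gam * max (B - d) 0"
  have c0: "?c \<ge> 0" using pars by simp
  have [measurable]: "lf \<in> borel_measurable N" by (rule lm)
  have ind: "integrable N (indicator {y \<in> space N. lf y < - d} :: real \<Rightarrow> real)"
    by (intro N.integrable_const_bound[where B=1]) (auto split: split_indicator)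
  have rm: "(\<lambda>y. rho a gam B C L lf d y) \<in> borel_measurable N"
    unfolding rho_def phat_def by measurable
  have ir: "integrable N (\<lambda>y. rho a gam B C L lf d y)"
    by (intro N.integrable_const_bound[where B="(d + L) / a + gam * B\<^sup>2 + C"] AE_I2 rm)
       (use rho_bound[OF pars] in auto)
  have "(\<integral>y. phat a gam B d + ?c * min (lf y) L - gam * (min (lf y) L)\<^sup>2
            - C * indicator {y \<in> space N. lf y < - d} y \<partial>N) \<le> (\<integral>y. rho a gam B C L lf d y \<partial>N)"
  proof (intro integral_mono_AE ir AE_I2)
    show "integrable N (\<lambda>y. phat a gam B d + ?c * min (lf y) L - gam * (min (lf y) L)\<^sup>2
            - C * indicator {y \<in> space N. lf y < - d} y)"
      using i1 i2 ind by auto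
    fix y assume "y \<in> space N"
    then show "phat a gam B d + ?c * min (lf y) L - gam * (min (lf y) L)\<^sup>2
            - C * indicator {y \<in> space N. lf y < - d} y \<le> rho a gam B C L lf d y"
      using rho_pointwise[OF pars, of lf y] by (simp add: indicator_def)
  qed
  also have "(\<integral>y. phat a gam B d + ?c * min (lf y) L - gam * (min (lf y) L)\<^sup>2
            - C * indicator {y \<in> space N. lf y < - d} y \<partial>N)
      = phat a gam B d + ?c * (\<integral>y. min (lf y) L \<partial>N) - gam * (\<integral>y. (min (lf y) L)\<^sup>2 \<partial>N)
          - C * measure N {y \<in> space N. lf y < - d}"
    using i1 i2 ind N.prob_space by (simp add: Bochner_Integration.integral_diff Bochner_Integration.integral_add)
  finally have *: "phat a gam B d + ?c * (\<integral>y. min (lf y) L \<partial>N) - gam * (\<integral>y. (min (lf y) L)\<^sup>2 \<partial>N)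
          - C * measure N {y \<in> space N. lf y < - d} \<le> (\<integral>y. rho a gam B C L lf d y \<partial>N)" .
  have "?c * m \<le> ?c * (\<integral>y. min (lf y) L \<partial>N)" using c0 m by (simp add: mult_left_mono)
  moreover have "gam * (\<integral>y. (min (lf y) L)\<^sup>2 \<partial>N) \<le> gam * S" using pars S by (intro mult_left_mono) auto
  ultimately show ?thesis using * by linarith
qed

lemma telescope:
  fixes Z :: "nat \<Rightarrow> real" and al :: "nat \<Rightarrow> bool"
  assumes dec: "\<And>n. al (Suc n) \<Longrightarrow> al n"
    and bnd: "\<And>n. lo \<le> Z n" "\<And>n. Z n \<le> hi"
  shows "(\<Sum>n\<in>{j0..<N}. (if al n then Z (Suc n) - Z n else 0)) \<le> hi - lo"
proof -
  let ?S = "\<lambda>N. (\<Sum>n\<in>{j0..<N}. (if al n then Z (Suc n) - Z n else 0))"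
  have inv: "(?S N = 0 \<or> (\<exists>m. ?S N = Z m - Z j0)) \<and> (al N \<longrightarrow> ?S N = Z N - Z j0)" if "j0 \<le> N" for N
    using that
  proof (induction N rule: nat_induct_at_least)
    case base
    then show ?case by simp
  next
    case (Suc N)
    have S: "?S (Suc N) = ?S N + (if al N then Z (Suc N) - Z N else 0)"
      using Suc.hyps by simp
    show ?case
    proof (cases "al N")
      case True
      then have "?S (Suc N) = Z (Suc N) - Z j0" using Suc.IH S by simp
      then show ?thesis by blast
    next
      case False
      then have "\<not> al (Suc N)" using dec by blast
      then show ?thesis using Suc.IH S False by simp
    qed
  qed
  have "lo \<le> hi" using bnd(1)[of 0] bnd(2)[of 0] by simp
  show ?thesis
  proof (cases "j0 \<le> N")
    case True
    then show ?thesis using inv[OF True] bnd[of j0] \<open>lo \<le> hi\<close>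
      by (smt (verit) bnd(1) bnd(2))
  next
    case False
    then show ?thesis using \<open>lo \<le> hi\<close> by simp
  qed
qed

definition pbar :: "real \<Rightarrow> real \<Rightarrow> real \<Rightarrow> real \<Rightarrow> real \<Rightarrow> real \<Rightarrow> real \<Rightarrow> real" where
  "pbar a gam B mu h U y = (if y < 0 then - gam * B\<^sup>2 - 1 + max y (- h) / mu else phat a gam B (min y U))"

lemma pbar_bounds:
  assumes "a > 0" "gam \<ge> 0" "B \<ge> 0" "mu > 0" "h \<ge> 0" "U \<ge> 0"
  shows "- gam * B\<^sup>2 - (1 + h / mu) \<le> pbar a gam B mu h U y" "pbar a gam B mu h U y \<le> U / a"
proof -
  have U: "U / a \<ge> 0" using assms by simp
  have "max y (- h) / mu \<ge> (- h) / mu" using assms by (intro divide_right_mono) auto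
  then have hm: "max y (- h) / mu \<ge> - h / mu" by simp
  show "- gam * B\<^sup>2 - (1 + h / mu) \<le> pbar a gam B mu h U y"
  proof (cases "y < 0")
    case True then show ?thesis using hm by (simp add: pbar_def)
  next
    case False
    then have "phat a gam B (min y U) \<ge> - gam * B\<^sup>2" using assms by (intro phat_ge) auto
    moreover have "h / mu \<ge> 0" using assms by simp
    ultimately show ?thesis using False by (simp add: pbar_def)
  qed
  show "pbar a gam B mu h U y \<le> U / a"
  proof (cases "y < 0")
    case True
    have "max y (- h) / mu \<le> 0" using True assms by (simp add: divide_le_0_iff)
    moreover have "gam * B\<^sup>2 \<ge> 0" using assms by simp
    ultimately show ?thesis using True U by (simp add: pbar_def)
  next
    case False
    have "phat a gam B (min y U) \<le> min y U / a" using assms by (intro phat_le)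
    also have "\<dots> \<le> U / a" using assms by (intro divide_right_mono) auto
    finally show ?thesis using False by (simp add: pbar_def)
  qed
qed

lemma pbar_skip:
  assumes "a > 0" "gam \<ge> 0" "B \<ge> 0" "mu > 0" "h \<ge> 0" "U \<ge> 0" "d < 0" "d \<ge> - h"
  shows "pbar a gam B mu h U (min (d + mu) 0) \<ge> pbar a gam B mu h U d + 1"
proof (cases "d + mu < 0")
  case True
  have "max (d + mu) (- h) = d + mu" "max d (- h) = d" using assms True by auto
  then show ?thesis using True assms by (simp add: pbar_def add_divide_distrib)
next
  case False
  have "max d (- h) / mu \<le> 0" using assms by (simp add: divide_le_0_iff)
  then show ?thesis using False assms by (simp add: pbar_def phat_def)
qed

lemma pbar_obs:
  assumes "a > 0" "gam \<ge> 0" "B \<ge> 0" "mu > 0" "h \<ge> 0" "L \<ge> 0" "d \<ge> 0" "d < A" "A > 0"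
  shows "pbar a gam B mu h (A + L) (max (d + lf y) (- h)) \<ge> rho a gam B (1 + h / mu) L lf d y"
proof (cases "d + min (lf y) L \<ge> 0")
  case True
  then have "d + lf y \<ge> 0" by linarith
  then have nw: "max (d + lf y) (- h) = d + lf y" using assms by auto
  have "d + min (lf y) L \<le> min (d + lf y) (A + L)" using assms by auto
  then have "phat a gam B (d + min (lf y) L) \<le> phat a gam B (min (d + lf y) (A + L))"
    using assms by (intro phat_mono) auto
  then show ?thesis using True nw \<open>d + lf y \<ge> 0\<close> by (simp add: pbar_def rho_def)
next
  case False
  then have r: "rho a gam B (1 + h / mu) L lf d y = - gam * B\<^sup>2 - (1 + h / mu)" by (simp add: rho_def)
  show ?thesis unfolding r using pbar_bounds(1)[of a gam B mu h "A + L"] assms by simp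
qed

locale drift_setup =
  fixes M :: "nat \<Rightarrow> real measure" and gb f :: "real \<Rightarrow> real" and mu h A a gam B L :: real
    and j0 :: nat and Ng :: "real measure" and E :: "(nat \<Rightarrow> real) set"
  assumes M_prob: "\<And>i. prob_space (M i)"
    and M_sets: "\<And>i. sets (M i) = sets (borel :: real measure)"
    and M_post: "\<And>i. j0 \<le> i \<Longrightarrow> M i = Ng"
    and l_meas: "llr gb f \<in> borel_measurable borel"
    and pars: "a > 0" "gam \<ge> 0" "B \<ge> 0" "L \<ge> 0" "mu > 0" "h \<ge> 0" "A > 0"
    and rho_ok: "\<And>d. 0 \<le> d \<Longrightarrow> d < A \<Longrightarrow>
        (\<integral>y. rho a gam B (1 + h / mu) L (llr gb f) d y \<partial>Ng) \<ge> phat a gam B d + 1"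
    and E_meas: "E \<in> sets (PiM UNIV M)"
    and E_loc: "\<And>x x'. (\<forall>i<j0. x i = x' i) \<Longrightarrow> x \<in> E \<longleftrightarrow> x' \<in> E"
begin

abbreviation "P \<equiv> PiM UNIV M"
abbreviation "DD x n \<equiv> rdc_D gb f mu h x n"
abbreviation "pb \<equiv> pbar a gam B mu h (A + L)"
abbreviation "C \<equiv> 1 + h / mu"
abbreviation "rh \<equiv> rho a gam B (1 + h / mu) L (llr gb f)"

lemma P_prob: "prob_space P" by (intro prob_space_PiM M_prob)

lemma D_m[measurable]: "(\<lambda>x. DD x n) \<in> borel_measurable P"
  by (rule D_meas[OF M_sets l_meas])

lemma l_m[measurable]: "llr gb f \<in> borel_measurable borel" by (rule l_meas)

lemma alive_m[measurable]: "alive gb f A mu h n \<in> sets P"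
  by (rule alive_meas[OF M_sets l_meas])

lemma E_m[measurable]: "E \<in> sets P" by (rule E_meas)

lemma pb_bnd: "\<bar>pb y\<bar> \<le> (A + L) / a + gam * B\<^sup>2 + C"
proof -
  have "- gam * B\<^sup>2 - C \<le> pb y" "pb y \<le> (A + L) / a"
    using pbar_bounds[of a gam B mu h "A + L" y] pars by auto
  moreover have "gam * B\<^sup>2 \<ge> 0" "C \<ge> 0" "(A + L) / a \<ge> 0" using pars by auto
  ultimately show ?thesis by linarith
qed

lemma pb_m[measurable]: "pb \<in> borel_measurable borel"
  unfolding pbar_def phat_def by measurable

lemma rh_m: "(\<lambda>(d, y). rh d y) \<in> borel_measurable (borel \<Otimes>\<^sub>M borel)"
  unfolding rho_def phat_def by measurable

lemma one_step:
  assumes n: "j0 \<le> n"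
  shows "measure P (E \<inter> alive gb f A mu h n)
     \<le> (\<integral>x. indicator (E \<inter> alive gb f A mu h n) x * (pb (DD x (Suc n)) - pb (DD x n)) \<partial>P)"
proof -
  let ?S = "E \<inter> alive gb f A mu h n"
  let ?I = "indicator ?S :: (nat \<Rightarrow> real) \<Rightarrow> real"
  let ?K = "(A + L) / a + gam * B\<^sup>2 + C"
  interpret Pp: prob_space P by (rule P_prob)
  interpret Nn: prob_space Ng using M_prob[of n] M_post[OF n] by simp
  define H where "H X y = ?I X * (if DD X n < 0 then pb (DD X n) + 1 else rh (DD X n) y)" for X y
  have S_m[measurable]: "?S \<in> sets P" by measurable
  have Mn: "M n = Ng" by (rule M_post[OF n])
  have K0: "?K \<ge> 0" "gam * B\<^sup>2 \<ge> 0" "C \<ge> 0" using pars by auto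
  have Dlt: "DD x n < A" if "x \<in> ?S" for x using that alive_lt[OF pars(7)] by auto
  have Dge: "DD x n \<ge> - h" for x using D_ge pars by auto
  have f1: "(\<lambda>z. fst z) \<in> borel_measurable (M n \<Otimes>\<^sub>M P)"
    using measurable_fst''[OF measurable_ident_sets[OF refl], of "M n" P] M_sets[of n]
    by (metis measurable_cong_sets measurable_fst)
  have f2[measurable]: "(\<lambda>z. DD (snd z) n) \<in> borel_measurable (M n \<Otimes>\<^sub>M P)"
    using measurable_compose[OF measurable_snd D_m] .
  have f3[measurable]: "(\<lambda>z. ?I (snd z)) \<in> borel_measurable (M n \<Otimes>\<^sub>M P)"
    using measurable_compose[OF measurable_snd borel_measurable_indicator[OF S_m]] .
  have f4[measurable]: "(\<lambda>z. llr gb f (fst z)) \<in> borel_measurable (M n \<Otimes>\<^sub>M P)"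
    using measurable_compose[OF f1 l_meas] .
  have Hm: "(\<lambda>(y, X). H X y) \<in> borel_measurable (M n \<Otimes>\<^sub>M P)"
  proof -
    have "(\<lambda>z. H (snd z) (fst z)) \<in> borel_measurable (M n \<Otimes>\<^sub>M P)"
      unfolding H_def rho_def phat_def pbar_def by measurable
    moreover have "(\<lambda>(y, X). H X y) = (\<lambda>z. H (snd z) (fst z))" by (auto simp: fun_eq_iff)
    ultimately show ?thesis by simp
  qed
  have Hb: "\<bar>H X y\<bar> \<le> ?K + 1" for X y
  proof (cases "X \<in> ?S")
    case False then show ?thesis using K0 by (simp add: H_def)
  next
    case True
    show ?thesis
    proof (cases "DD X n < 0")
      case True2: True
      then show ?thesis using True pb_bnd[of "DD X n"] by (simp add: H_def)
    next
      case False
      have "\<bar>rh (DD X n) y\<bar> \<le> (DD X n + L) / a + gam * B\<^sup>2 + C"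
        using False pars by (intro rho_bound) auto
      also have "(DD X n + L) / a \<le> (A + L) / a" using Dlt[OF True] pars by (intro divide_right_mono) auto
      finally show ?thesis using True False by (simp add: H_def)
    qed
  qed
  have Hloc: "H X y = H X' y" if "\<forall>i<n. X i = X' i" for X X' y
  proof -
    have "X \<in> E \<longleftrightarrow> X' \<in> E" using that n by (intro E_loc) auto
    moreover have "X \<in> alive gb f A mu h n \<longleftrightarrow> X' \<in> alive gb f A mu h n" using that by (rule alive_loc)
    moreover have "DD X n = DD X' n" using that by (rule D_loc)
    ultimately show ?thesis by (simp add: H_def indicator_def)
  qed
  have pw1: "H x (x n) \<le> ?I x * pb (DD x (Suc n))" for x
  proof (cases "x \<in> ?S")
    case False then show ?thesis by (simp add: H_def)
  next
    case True
    show ?thesis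
    proof (cases "DD x n < 0")
      case True2: True
      then have "pb (DD x (Suc n)) \<ge> pb (DD x n) + 1"
        using pbar_skip[of a gam B mu h "A + L" "DD x n"] pars Dge[of x] by auto
      then show ?thesis using True True2 by (simp add: H_def)
    next
      case False
      then have "pb (DD x (Suc n)) \<ge> rh (DD x n) (x n)"
        using pbar_obs[of a gam B mu h L "DD x n" A "llr gb f" "x n"] pars Dlt[OF True] by auto
      then show ?thesis using True False by (simp add: H_def)
    qed
  qed
  have pw2: "?I x * (pb (DD x n) + 1) \<le> (\<integral>y. H x y \<partial>Ng)" for x
  proof (cases "x \<in> ?S")
    case False then show ?thesis by (simp add: H_def)
  next
    case True
    show ?thesis
    proof (cases "DD x n < 0")
      case True2: True
      then show ?thesis using True Nn.prob_space by (simp add: H_def)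
    next
      case False
      have "phat a gam B (DD x n) + 1 \<le> (\<integral>y. rh (DD x n) y \<partial>Ng)"
        using rho_ok[of "DD x n"] False Dlt[OF True] by auto
      moreover have "pb (DD x n) = phat a gam B (DD x n)"
        using False Dlt[OF True] pars by (simp add: pbar_def min_def)
      ultimately show ?thesis using True False by (simp add: H_def)
    qed
  qed
  have iH: "integrable P (\<lambda>x. H x (x n))"
  proof (intro Pp.integrable_const_bound[where B="?K + 1"] AE_I2)
    show "(\<lambda>x. H x (x n)) \<in> borel_measurable P"
    proof -
      have "(\<lambda>x. (x n, x)) \<in> P \<rightarrow>\<^sub>M (M n \<Otimes>\<^sub>M P)"
        by (intro measurable_Pair measurable_component_singleton measurable_ident_sets) auto
      from measurable_comp[OF this Hm] show ?thesis by (simp add: comp_def)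
    qed
  qed (use Hb in auto)
  have ipb: "integrable P (\<lambda>x. ?I x * pb (DD x m))" for m
    by (intro Pp.integrable_const_bound[where B="?K"] AE_I2)
       (use pb_bnd K0 in \<open>auto simp: indicator_def\<close>)
  have iH2: "integrable P (\<lambda>x. (\<integral>y. H x y \<partial>Ng))"
    using indep_step_int[OF M_prob Hm Hb] Mn by simp
  have iI: "integrable P ?I" by (intro Pp.integrable_const_bound[where B=1] AE_I2) (auto simp: indicator_def)
  have eq: "(\<integral>x. H x (x n) \<partial>P) = (\<integral>x. (\<integral>y. H x y \<partial>Ng) \<partial>P)"
    using indep_step[OF M_prob Hm Hb Hloc] Mn by simp
  have "(\<integral>x. ?I x * (pb (DD x n) + 1) \<partial>P) \<le> (\<integral>x. (\<integral>y. H x y \<partial>Ng) \<partial>P)"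
  proof (rule integral_mono[OF _ iH2 pw2])
    show "integrable P (\<lambda>x. ?I x * (pb (DD x n) + 1))"
      using ipb[of n] iI by (simp add: distrib_left)
  qed
  also have "\<dots> = (\<integral>x. H x (x n) \<partial>P)" using eq by simp
  also have "\<dots> \<le> (\<integral>x. ?I x * pb (DD x (Suc n)) \<partial>P)"
    by (rule integral_mono[OF iH ipb pw1])
  finally have main: "(\<integral>x. ?I x * (pb (DD x n) + 1) \<partial>P) \<le> (\<integral>x. ?I x * pb (DD x (Suc n)) \<partial>P)" .
  have "(\<integral>x. ?I x * (pb (DD x n) + 1) \<partial>P) = (\<integral>x. ?I x * pb (DD x n) \<partial>P) + measure P ?S"
    using ipb[of n] iI by (simp add: distrib_left)
  moreover have "(\<integral>x. ?I x * (pb (DD x (Suc n)) - pb (DD x n)) \<partial>P)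
      = (\<integral>x. ?I x * pb (DD x (Suc n)) \<partial>P) - (\<integral>x. ?I x * pb (DD x n) \<partial>P)"
    using ipb[of n] ipb[of "Suc n"] by (simp add: right_diff_distrib)
  ultimately show ?thesis using main by linarith
qed

lemma key_sum:
  "(\<Sum>n\<in>{j0..<N}. measure P (E \<inter> alive gb f A mu h n)) \<le> ((A + L) / a + gam * B\<^sup>2 + C) * measure P E"
proof -
  interpret Pp: prob_space P by (rule P_prob)
  let ?K = "(A + L) / a + gam * B\<^sup>2 + C"
  let ?T = "\<lambda>n x. indicator (E \<inter> alive gb f A mu h n) x * (pb (DD x (Suc n)) - pb (DD x n)) :: real"
  have K0: "?K \<ge> 0" using pars by auto
  have iT: "integrable P (?T n)" for n
  proof (intro Pp.integrable_const_bound[where B="2 * ?K"] AE_I2)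
    fix x
    have ab: "\<And>u v K::real. \<bar>u\<bar> \<le> K \<Longrightarrow> \<bar>v\<bar> \<le> K \<Longrightarrow> \<bar>v - u\<bar> \<le> 2 * K" by arith
    have "\<bar>pb (DD x (Suc n)) - pb (DD x n)\<bar> \<le> 2 * ?K" by (rule ab[OF pb_bnd pb_bnd])
    then show "norm (?T n x) \<le> 2 * ?K" using K0 by (auto simp: indicator_def)
  qed measurable
  have "(\<Sum>n\<in>{j0..<N}. measure P (E \<inter> alive gb f A mu h n)) \<le> (\<Sum>n\<in>{j0..<N}. (\<integral>x. ?T n x \<partial>P))"
    by (intro sum_mono one_step) auto
  also have "\<dots> = (\<integral>x. (\<Sum>n\<in>{j0..<N}. ?T n x) \<partial>P)"
    by (rule Bochner_Integration.integral_sum[symmetric]) (rule iT)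
  also have "\<dots> \<le> (\<integral>x. indicator E x * ?K \<partial>P)"
  proof (intro integral_mono)
    show "integrable P (\<lambda>x. \<Sum>n\<in>{j0..<N}. ?T n x)" by (rule Bochner_Integration.integrable_sum) (rule iT)
    show "integrable P (\<lambda>x. indicator E x * ?K)"
      by (intro Pp.integrable_const_bound[where B="?K"] AE_I2) (use K0 in \<open>auto simp: indicator_def\<close>)
    fix x
    have tel: "(\<Sum>n\<in>{j0..<N}. (if x \<in> alive gb f A mu h n then pb (DD x (Suc n)) - pb (DD x n) else 0)) \<le> ?K"
    proof -
      have "(\<Sum>n\<in>{j0..<N}. (if x \<in> alive gb f A mu h n then pb (DD x (Suc n)) - pb (DD x n) else 0))
          \<le> (A + L) / a - (- gam * B\<^sup>2 - C)"
        by (rule telescope[where Z="\<lambda>n. pb (DD x n)" and al="\<lambda>n. x \<in> alive gb f A mu h n"])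
           (use alive_mono[of n "Suc n" x gb f A mu h for n] pbar_bounds[of a gam B mu h "A + L"] pars in auto)
      then show ?thesis by simp
    qed
    show "(\<Sum>n\<in>{j0..<N}. ?T n x) \<le> indicator E x * ?K"
    proof (cases "x \<in> E")
      case True
      then have "(\<Sum>n\<in>{j0..<N}. ?T n x) = (\<Sum>n\<in>{j0..<N}. (if x \<in> alive gb f A mu h n then pb (DD x (Suc n)) - pb (DD x n) else 0))"
        by (intro sum.cong) (auto simp: indicator_def)
      then show ?thesis using True tel by simp
    next
      case False then show ?thesis by (simp add: indicator_def)
    qed
  qed
  also have "\<dots> = ?K * measure P E" by simp
  finally show ?thesis .
qed

end

lemma ae_bound_from_sets:
  assumes sf: "sigma_finite_subalgebra M F" and pM: "prob_space M"
    and Ym[measurable]: "Y \<in> borel_measurable M"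
    and bnd: "\<And>E. E \<in> sets F \<Longrightarrow> (\<integral>\<^sup>+x. indicator E x * Y x \<partial>M) \<le> ennreal c * emeasure M E"
  shows "AE x in M. nn_cond_exp M F Y x \<le> ennreal c"
proof -
  interpret sigma_finite_subalgebra M F by (rule sf)
  interpret pr: prob_space M by (rule pM)
  let ?Z = "nn_cond_exp M F Y"
  have ZF[measurable]: "?Z \<in> borel_measurable F" by simp
  have ZM[measurable]: "?Z \<in> borel_measurable M" by simp
  have spF: "space F = space M" using subalg by (simp add: subalgebra_def)
  define E0 where "E0 = {x \<in> space M. ennreal c < ?Z x}"
  have E0F: "E0 \<in> sets F"
  proof -
    have "{x \<in> space F. ennreal c < ?Z x} \<in> sets F" by measurable
    then show ?thesis using spF by (simp add: E0_def)
  qed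
  have E0M[measurable]: "E0 \<in> sets M" using E0F subalg by (auto simp: subalgebra_def)
  have ind_F: "indicator E0 \<in> borel_measurable F" using E0F by simp
  have eq: "(\<integral>\<^sup>+x. indicator E0 x * ?Z x \<partial>M) = (\<integral>\<^sup>+x. indicator E0 x * Y x \<partial>M)"
    by (rule nn_cond_exp_intg[OF ind_F Ym])
  have fint: "(\<integral>\<^sup>+x. ennreal c * indicator E0 x \<partial>M) = ennreal c * emeasure M E0"
    by (simp add: nn_integral_cmult)
  have AE1: "AE x in M. indicator E0 x * ?Z x \<le> ennreal c * indicator E0 x"
  proof (rule ccontr)
    assume na: "\<not> (AE x in M. indicator E0 x * ?Z x \<le> ennreal c * indicator E0 x)"
    have "(\<integral>\<^sup>+x. ennreal c * indicator E0 x \<partial>M) < (\<integral>\<^sup>+x. indicator E0 x * ?Z x \<partial>M)"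
    proof (rule nn_integral_less)
      show "(\<integral>\<^sup>+x. ennreal c * indicator E0 x \<partial>M) \<noteq> \<infinity>"
        unfolding fint using pr.emeasure_finite[of E0] by (simp add: ennreal_mult_eq_top_iff)
      show "AE x in M. ennreal c * indicator E0 x \<le> indicator E0 x * ?Z x"
        by (intro AE_I2) (auto simp: E0_def indicator_def less_imp_le)
    qed (use na in auto)
    also have "\<dots> \<le> ennreal c * emeasure M E0" using eq bnd[OF E0F] by simp
    finally show False using fint by simp
  qed
  then show ?thesis
  proof (rule AE_mp[OF _ AE_I2, rule_format])
    fix x assume x: "x \<in> space M" and h: "indicator E0 x * ?Z x \<le> ennreal c * indicator E0 x"
    show "?Z x \<le> ennreal c"
    proof (cases "x \<in> E0")
      case True then show ?thesis using h by simp
    next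
      case False then show ?thesis using x by (auto simp: E0_def not_less)
    qed
  qed
qed

lemma delay_le_sum:
  assumes k: "k \<ge> 1"
  shows "delay (rdc_tau gb f A mu h x) k
     \<le> (\<Sum>n. (if k - 1 \<le> n \<and> x \<in> alive gb f A mu h n then 1 else 0 :: ennreal))"
proof -
  let ?w = "\<lambda>n. (if k - 1 \<le> n \<and> x \<in> alive gb f A mu h n then 1 else 0 :: ennreal)"
  have psum: "(\<Sum>n\<in>{k - 1..<N}. ?w n) = of_nat (N - (k - 1))" if "\<forall>n\<in>{k - 1..<N}. x \<in> alive gb f A mu h n" for N
    using that by simp
  have le: "sum ?w I \<le> (\<Sum>n. ?w n)" if "finite I" for I
    by (rule sum_le_suminf) (use that in auto)
  show ?thesis
  proof (cases "\<exists>n\<ge>1. rdc_D gb f mu h x n \<ge> A")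
    case True
    define s where "s = (LEAST n. n \<ge> 1 \<and> rdc_D gb f mu h x n \<ge> A)"
    have tau: "rdc_tau gb f A mu h x = enat s" using True by (simp add: rdc_tau_def s_def)
    have lt: "rdc_D gb f mu h x m < A" if "m < s" "1 \<le> m" for m
      using that not_less_Least[of m "\<lambda>n. n \<ge> 1 \<and> rdc_D gb f mu h x n \<ge> A"]
      by (auto simp: s_def not_le)
    have al: "x \<in> alive gb f A mu h n" if "n < s" for n
      unfolding alive_def using that lt by auto
    have "delay (rdc_tau gb f A mu h x) k = of_nat (s - (k - 1))"
      using k by (simp add: tau delay_def)
    also have "\<dots> = (\<Sum>n\<in>{k - 1..<s}. ?w n)" using psum[of s] al by simp
    also have "\<dots> \<le> (\<Sum>n. ?w n)" by (rule le) simp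
    finally show ?thesis .
  next
    case False
    then have tau: "rdc_tau gb f A mu h x = \<infinity>" by (simp add: rdc_tau_def)
    have al: "x \<in> alive gb f A mu h n" for n unfolding alive_def
    proof (intro CollectI allI impI)
      fix m assume m: "1 \<le> m \<and> m \<le> n"
      have "\<not> (m \<ge> 1 \<and> rdc_D gb f mu h x m \<ge> A)" using False by blast
      then show "rdc_D gb f mu h x m < A" using m by linarith
    qed
    have "of_nat N \<le> (\<Sum>n. ?w n)" for N
    proof -
      have "of_nat N = (\<Sum>n\<in>{k - 1..<k - 1 + N}. ?w n)" using psum[of "k - 1 + N"] al by simp
      also have "\<dots> \<le> (\<Sum>n. ?w n)" by (rule le) simp
      finally show ?thesis .
    qed
    then have "(SUP N. of_nat N :: ennreal) \<le> (\<Sum>n. ?w n)" by (intro SUP_least) auto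
    then have "(\<Sum>n. ?w n) = \<infinity>" by (simp add: ennreal_SUP_of_nat_eq_top top_unique)
    then show ?thesis by simp
  qed
qed

lemma law_prob: "is_density g \<Longrightarrow> prob_space (law g)"
  unfolding is_density_def law_def
  by (intro prob_spaceI) (auto simp: emeasure_density_const emeasure_density)

lemma sets_law: "sets (law g) = sets borel"
  by (simp add: law_def)

lemma esssup_k_bound:
  fixes k :: nat
  assumes k: "k \<ge> 1" and pf: "prob_space (law f)" and pg: "prob_space (law g)"
    and c: "c \<ge> 0"
    and key: "\<And>E N. E \<in> sets (Pk f g k) \<Longrightarrow> (\<And>x x'. (\<forall>i<k - 1. x i = x' i) \<Longrightarrow> x \<in> E \<longleftrightarrow> x' \<in> E) \<Longrightarrow>
        (\<Sum>n\<in>{k - 1..<N}. measure (Pk f g k) (E \<inter> alive gb f A mu h n)) \<le> c * measure (Pk f g k) E"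
    and l_meas: "llr gb f \<in> borel_measurable borel"
  shows "esssup (Pk f g k) (nn_cond_exp (Pk f g k) (info_alg (Pk f g k) gb f mu h (k - 1))
            (\<lambda>x. delay (rdc_tau gb f A mu h x) k)) \<le> ennreal c"
proof -
  define Mi where "Mi i = (if i + 1 < k then law f else law g)" for i
  have P: "Pk f g k = PiM UNIV Mi" unfolding Pk_def Mi_def by (rule refl)
  have Mp: "prob_space (Mi i)" for i using pf pg by (simp add: Mi_def)
  have Ms: "sets (Mi i) = sets borel" for i by (simp add: Mi_def sets_law)
  let ?P = "Pk f g k"
  let ?F = "info_alg (Pk f g k) gb f mu h (k - 1)"
  let ?Y = "\<lambda>x. delay (rdc_tau gb f A mu h x) k"
  interpret pr: prob_space ?P unfolding P by (intro prob_space_PiM Mp)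
  have spP: "space ?P = UNIV" unfolding P by (rule space_PiM_UNIV[OF Ms])
  show ?thesis
  proof (cases "?Y \<in> borel_measurable ?P \<and> subalgebra ?P ?F")
    case False
    then have "nn_cond_exp ?P ?F ?Y = (\<lambda>_. 0)" unfolding nn_cond_exp_def by (simp only: if_False)
    then show ?thesis by (intro esssup_I) auto
  next
    case True
    then have Ym: "?Y \<in> borel_measurable ?P" and sub: "subalgebra ?P ?F" by auto
    have sf: "sigma_finite_subalgebra ?P ?F"
    proof (rule finite_measure_subalgebra_is_sigma_finite)
      show "finite_measure_subalgebra ?P ?F"
        unfolding finite_measure_subalgebra_def finite_measure_subalgebra_axioms_def
        using sub pr.finite_measure_axioms by simp
    qed
    have bnd: "(\<integral>\<^sup>+x. indicator E x * ?Y x \<partial>?P) \<le> ennreal c * emeasure ?P E" if EF: "E \<in> sets ?F" for E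
    proof -
      have EP[measurable]: "E \<in> sets ?P" using EF sub by (auto simp: subalgebra_def)
      have loc: "x \<in> E \<longleftrightarrow> x' \<in> E" if xx: "\<forall>i<k - 1. x i = x' i" for x x'
      proof -
        have "rdc_info gb f mu h (k - 1) \<in> space ?P \<rightarrow> space info_space"
          by (simp add: info_space_def space_PiM space_pair_measure)
        then have sv: "sets ?F = {rdc_info gb f mu h (k - 1) -` A \<inter> space ?P | A. A \<in> sets info_space}"
          unfolding info_alg_def by (rule sets_vimage_algebra2)
        have "E \<in> {rdc_info gb f mu h (k - 1) -` A \<inter> space ?P | A. A \<in> sets info_space}"
          using EF by (simp only: sv)
        then obtain A' where E: "E = rdc_info gb f mu h (k - 1) -` A' \<inter> space ?P"
          by blast
        have "rdc_info gb f mu h (k - 1) x = rdc_info gb f mu h (k - 1) x'"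
          using xx D_loc[of _ x x' gb f mu h]
          by (auto simp: rdc_info_def rdc_M_def fun_eq_iff)
        then show ?thesis using E spP by simp
      qed
      define S where "S n = (if k - 1 \<le> n then E \<inter> alive gb f A mu h n else {})" for n
      have Sm[measurable]: "S n \<in> sets ?P" for n
        unfolding S_def P using alive_meas[OF Ms l_meas] EP[unfolded P] by auto
      have "(\<integral>\<^sup>+x. indicator E x * ?Y x \<partial>?P)
          \<le> (\<integral>\<^sup>+x. (\<Sum>n. indicator (S n) x) \<partial>?P)"
      proof (intro nn_integral_mono)
        fix x
        have "indicator E x * ?Y x \<le> indicator E x * (\<Sum>n. (if k - 1 \<le> n \<and> x \<in> alive gb f A mu h n then 1 else 0 :: ennreal))"
          by (intro mult_left_mono delay_le_sum k) simp
        also have "\<dots> = (\<Sum>n. indicator (S n) x)"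
        proof (cases "x \<in> E")
          case True
          have "(\<lambda>n. (if k - 1 \<le> n \<and> x \<in> alive gb f A mu h n then 1 else 0 :: ennreal)) = (\<lambda>n. indicator (S n) x)"
            using True by (auto simp: S_def indicator_def fun_eq_iff)
          then show ?thesis using True by simp
        next
          case False
          have "(\<lambda>n. indicator (S n) x :: ennreal) = (\<lambda>n. 0)"
            using False by (auto simp: S_def indicator_def fun_eq_iff)
          then show ?thesis using False by simp
        qed
        finally show "indicator E x * ?Y x \<le> (\<Sum>n. indicator (S n) x)" .
      qed
      also have "\<dots> = (\<Sum>n. emeasure ?P (S n))"
        by (subst nn_integral_suminf) auto
      also have "\<dots> \<le> ennreal (c * measure ?P E)"
      proof (rule suminf_le_const)
        fix N
        have "(\<Sum>n<N. emeasure ?P (S n)) = ennreal (\<Sum>n<N. measure ?P (S n))"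
          by (simp add: pr.emeasure_eq_measure sum_ennreal)
        also have "(\<Sum>n<N. measure ?P (S n)) = (\<Sum>n\<in>{k - 1..<N}. measure ?P (E \<inter> alive gb f A mu h n))"
        proof -
          have "(\<Sum>n<N. measure ?P (S n)) = (\<Sum>n\<in>{k - 1..<N}. measure ?P (S n))"
            by (rule sum.mono_neutral_right) (auto simp: S_def)
          also have "\<dots> = (\<Sum>n\<in>{k - 1..<N}. measure ?P (E \<inter> alive gb f A mu h n))"
            by (intro sum.cong) (auto simp: S_def)
          finally show ?thesis .
        qed
        also have "\<dots> \<le> c * measure ?P E" by (rule key[OF EP loc])
        finally show "(\<Sum>n<N. emeasure ?P (S n)) \<le> ennreal (c * measure ?P E)" by (simp add: ennreal_leI)
      qed simp
      also have "\<dots> = ennreal c * emeasure ?P E"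
        using c by (simp add: pr.emeasure_eq_measure ennreal_mult)
      finally show ?thesis .
    qed
    have "AE x in ?P. nn_cond_exp ?P ?F ?Y x \<le> ennreal c"
      by (rule ae_bound_from_sets[OF sf pr.prob_space_axioms Ym bnd])
    then show ?thesis by (intro esssup_I) auto
  qed
qed

lemma layer:
  fixes \<phi> :: "real \<Rightarrow> real"
  assumes N: "prob_space N" "sets N = sets borel" and \<phi>m: "\<phi> \<in> borel_measurable borel" and \<phi>0: "\<And>y. \<phi> y \<ge> 0"
  shows "(\<integral>\<^sup>+y. ennreal (\<phi> y) \<partial>N) = (\<integral>\<^sup>+t. indicator {0..} t * emeasure N {y. t < \<phi> y} \<partial>lborel)"
proof -
  interpret N: prob_space N by (rule N(1))
  interpret pp: pair_sigma_finite N lborel by unfold_locales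
  have spN: "space N = UNIV" using sets_eq_imp_space_eq[OF N(2)] by simp
  have [measurable]: "\<phi> \<in> borel_measurable N" using \<phi>m N(2) measurable_cong_sets by blast
  have meas: "(\<lambda>(y, t). indicator {0..<\<phi> y} t :: ennreal) \<in> borel_measurable (N \<Otimes>\<^sub>M lborel)"
  proof -
    have "{z \<in> space (N \<Otimes>\<^sub>M lborel). 0 \<le> snd z \<and> snd z < \<phi> (fst z)} \<in> sets (N \<Otimes>\<^sub>M lborel)"
      by measurable
    then have "{z. 0 \<le> snd z \<and> snd z < \<phi> (fst z)} \<in> sets (N \<Otimes>\<^sub>M lborel)"
      by (simp add: space_pair_measure spN)
    then have "(indicator {z. 0 \<le> snd z \<and> snd z < \<phi> (fst z)} :: _ \<Rightarrow> ennreal) \<in> borel_measurable (N \<Otimes>\<^sub>M lborel)"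
      by (rule borel_measurable_indicator)
    moreover have "(\<lambda>(y, t). indicator {0..<\<phi> y} t :: ennreal) = indicator {z. 0 \<le> snd z \<and> snd z < \<phi> (fst z)}"
      by (auto simp: fun_eq_iff indicator_def)
    ultimately show ?thesis by simp
  qed
  have "(\<integral>\<^sup>+y. ennreal (\<phi> y) \<partial>N) = (\<integral>\<^sup>+y. (\<integral>\<^sup>+t. indicator {0..<\<phi> y} t \<partial>lborel) \<partial>N)"
    using \<phi>0 by (intro nn_integral_cong) simp
  also have "\<dots> = (\<integral>\<^sup>+t. (\<integral>\<^sup>+y. indicator {0..<\<phi> y} t \<partial>N) \<partial>lborel)"
    using pp.Fubini'[OF meas] by simp
  also have "\<dots> = (\<integral>\<^sup>+t. indicator {0..} t * emeasure N {y. t < \<phi> y} \<partial>lborel)"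
  proof (intro nn_integral_cong)
    fix t :: real
    have "(\<lambda>y. indicator {0..<\<phi> y} t :: ennreal) = (\<lambda>y. indicator {0..} t * indicator {y. t < \<phi> y} y)"
      by (auto simp: fun_eq_iff indicator_def)
    moreover have "{y. t < \<phi> y} \<in> sets N"
    proof -
      have "{y \<in> space N. t < \<phi> y} \<in> sets N" by measurable
      then show ?thesis by (simp add: spN)
    qed
    ultimately show "(\<integral>\<^sup>+y. indicator {0..<\<phi> y} t \<partial>N) = indicator {0..} t * emeasure N {y. t < \<phi> y}"
      by (simp add: nn_integral_cmult)
  qed
  finally show ?thesis .
qed

lemma layer_dom:
  fixes \<phi> :: "real \<Rightarrow> real"
  assumes N1: "prob_space N1" "sets N1 = sets borel" and N2: "prob_space N2" "sets N2 = sets borel"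
    and \<phi>m: "\<phi> \<in> borel_measurable borel" and \<phi>0: "\<And>y. \<phi> y \<ge> 0"
    and dom: "\<And>t. t \<ge> 0 \<Longrightarrow> emeasure N1 {y. t < \<phi> y} \<le> emeasure N2 {y. t < \<phi> y}"
  shows "(\<integral>\<^sup>+y. ennreal (\<phi> y) \<partial>N1) \<le> (\<integral>\<^sup>+y. ennreal (\<phi> y) \<partial>N2)"
  unfolding layer[OF N1 \<phi>m \<phi>0] layer[OF N2 \<phi>m \<phi>0]
  by (intro nn_integral_mono) (auto simp: indicator_def intro: mult_left_mono dom)

context
  fixes Ng Nb :: "real measure" and l :: "real \<Rightarrow> real"
  assumes Ng: "prob_space Ng" "sets Ng = sets borel"
    and Nb: "prob_space Nb" "sets Nb = sets borel"
    and lm[measurable]: "l \<in> borel_measurable borel"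
    and ig2: "integrable Ng (\<lambda>x. (l x)\<^sup>2)" and ib2: "integrable Nb (\<lambda>x. (l x)\<^sup>2)"
    and dom: "\<And>t. measure Nb {x. l x \<ge> t} \<le> measure Ng {x. l x \<ge> t}"
begin

lemma spNg: "space Ng = UNIV" using sets_eq_imp_space_eq[OF Ng(2)] by simp
lemma spNb: "space Nb = UNIV" using sets_eq_imp_space_eq[OF Nb(2)] by simp
lemma lmg: "l \<in> borel_measurable Ng" using lm Ng(2) measurable_cong_sets by blast
lemma lmb: "l \<in> borel_measurable Nb" using lm Nb(2) measurable_cong_sets by blast

lemma lsets: "{y. l y < s} \<in> sets borel" "{y. l y \<ge> s} \<in> sets borel"
proof -
  have "{y \<in> space borel. l y < s} \<in> sets borel" by measurable
  moreover have "{y \<in> space borel. l y \<ge> s} \<in> sets borel" by measurable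
  ultimately show "{y. l y < s} \<in> sets borel" "{y. l y \<ge> s} \<in> sets borel" by simp_all
qed

lemma ig1: "integrable Ng l"
proof -
  interpret prob_space Ng by (rule Ng(1))
  show ?thesis by (rule square_integrable_imp_integrable[OF lmg ig2])
qed
lemma ib1: "integrable Nb l"
proof -
  interpret prob_space Nb by (rule Nb(1))
  show ?thesis by (rule square_integrable_imp_integrable[OF lmb ib2])
qed

lemma dom_lt: "emeasure Ng {y. l y < s} \<le> emeasure Nb {y. l y < s}"
proof -
  interpret G: prob_space Ng by (rule Ng(1))
  interpret Bb: prob_space Nb by (rule Nb(1))
  have sg: "{y. l y \<ge> s} \<in> sets Ng" "{y. l y < s} \<in> sets Ng" using lsets Ng(2) by auto
  have sb: "{y. l y \<ge> s} \<in> sets Nb" "{y. l y < s} \<in> sets Nb" using lsets Nb(2) by auto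
  have cg: "{y. l y < s} = space Ng - {y. l y \<ge> s}" by (auto simp: spNg)
  have cb: "{y. l y < s} = space Nb - {y. l y \<ge> s}" by (auto simp: spNb)
  have "measure Ng {y. l y < s} = 1 - measure Ng {y. l y \<ge> s}"
    by (subst cg) (rule G.prob_compl[OF sg(1)])
  moreover have "measure Nb {y. l y < s} = 1 - measure Nb {y. l y \<ge> s}"
    by (subst cb) (rule Bb.prob_compl[OF sb(1)])
  ultimately have "measure Ng {y. l y < s} \<le> measure Nb {y. l y < s}" using dom[of s] by simp
  then show ?thesis by (simp add: G.emeasure_eq_measure Bb.emeasure_eq_measure)
qed

lemma dom_lt_measure: "measure Ng {y. l y < s} \<le> measure Nb {y. l y < s}"
proof -
  interpret G: prob_space Ng by (rule Ng(1))
  interpret Bb: prob_space Nb by (rule Nb(1))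
  show ?thesis using dom_lt[of s] by (simp add: G.emeasure_eq_measure Bb.emeasure_eq_measure)
qed

lemma dom_nn:
  fixes \<phi> :: "real \<Rightarrow> real"
  assumes \<phi>m: "\<phi> \<in> borel_measurable borel" and \<phi>0: "\<And>z. \<phi> z \<ge> 0"
    and lev: "\<And>t. t \<ge> 0 \<Longrightarrow> \<exists>s. {y. t < \<phi> (l y)} = {y. l y < s}"
    and i1: "integrable Ng (\<lambda>y. \<phi> (l y))" and i2: "integrable Nb (\<lambda>y. \<phi> (l y))"
  shows "(\<integral>y. \<phi> (l y) \<partial>Ng) \<le> (\<integral>y. \<phi> (l y) \<partial>Nb)"
proof -
  have c: "(\<lambda>y. \<phi> (l y)) \<in> borel_measurable borel" using \<phi>m by measurable
  have "(\<integral>\<^sup>+y. ennreal (\<phi> (l y)) \<partial>Ng) \<le> (\<integral>\<^sup>+y. ennreal (\<phi> (l y)) \<partial>Nb)"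
  proof (rule layer_dom[OF Ng Nb c])
    fix t :: real assume "t \<ge> 0"
    then obtain s where "{y. t < \<phi> (l y)} = {y. l y < s}" using lev by blast
    then show "emeasure Ng {y. t < \<phi> (l y)} \<le> emeasure Nb {y. t < \<phi> (l y)}" using dom_lt by simp
  qed (use \<phi>0 in auto)
  moreover have "(\<integral>\<^sup>+y. ennreal (\<phi> (l y)) \<partial>Ng) = ennreal (\<integral>y. \<phi> (l y) \<partial>Ng)"
    using i1 \<phi>0 by (intro nn_integral_eq_integral) auto
  moreover have "(\<integral>\<^sup>+y. ennreal (\<phi> (l y)) \<partial>Nb) = ennreal (\<integral>y. \<phi> (l y) \<partial>Nb)"
    using i2 \<phi>0 by (intro nn_integral_eq_integral) auto
  moreover have "(\<integral>y. \<phi> (l y) \<partial>Nb) \<ge> 0" using \<phi>0 by (intro integral_nonneg_AE) auto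
  ultimately show ?thesis by (simp add: ennreal_le_iff)
qed

lemma int_bound:
  fixes N :: "real measure"
  assumes "prob_space N" "l \<in> borel_measurable N" "integrable N (\<lambda>x. (l x)\<^sup>2)"
    and "\<psi> \<in> borel_measurable borel" "\<And>z. \<bar>\<psi> z\<bar> \<le> K + z\<^sup>2"
  shows "integrable N (\<lambda>y. \<psi> (l y))"
proof -
  interpret prob_space N by fact
  show ?thesis
  proof (rule Bochner_Integration.integrable_bound[where f="\<lambda>y. K + (l y)\<^sup>2"])
    show "integrable N (\<lambda>y. K + (l y)\<^sup>2)" using assms by auto
    show "(\<lambda>y. \<psi> (l y)) \<in> borel_measurable N" using assms by measurable
    show "AE x in N. norm (\<psi> (l x)) \<le> norm (K + (l x)\<^sup>2)"
      using assms(5) by (intro AE_I2) (smt (verit, best) real_norm_def)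
  qed
qed

lemma dom_min:
  assumes L: "L \<ge> 0"
  shows "(\<integral>y. min (l y) L \<partial>Nb) \<le> (\<integral>y. min (l y) L \<partial>Ng)"
proof -
  let ?\<phi> = "\<lambda>z. max (L - z) 0"
  have b: "\<bar>?\<phi> z\<bar> \<le> (L + 1) + z\<^sup>2" for z :: real
  proof -
    have "0 \<le> (\<bar>z\<bar> - 1)\<^sup>2" by simp
    then have "2 * \<bar>z\<bar> \<le> z\<^sup>2 + 1" by (simp add: power2_diff)
    then have "\<bar>z\<bar> \<le> 1 + z\<^sup>2" by (smt (verit) zero_le_power2)
    then show ?thesis using L by (auto simp: abs_le_iff max_def)
  qed
  have ig: "integrable Ng (\<lambda>y. ?\<phi> (l y))" by (rule int_bound[OF Ng(1) lmg ig2 _ b]) measurable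
  have ib: "integrable Nb (\<lambda>y. ?\<phi> (l y))" by (rule int_bound[OF Nb(1) lmb ib2 _ b]) measurable
  have "(\<integral>y. ?\<phi> (l y) \<partial>Ng) \<le> (\<integral>y. ?\<phi> (l y) \<partial>Nb)"
  proof (rule dom_nn[OF _ _ _ ig ib])
    fix t :: real assume "t \<ge> 0"
    then have "{y. t < ?\<phi> (l y)} = {y. l y < L - t}" by (auto simp: max_def)
    then show "\<exists>s. {y. t < ?\<phi> (l y)} = {y. l y < s}" by blast
  qed auto
  moreover have "min (l y) L = L - ?\<phi> (l y)" for y by (auto simp: max_def min_def)
  moreover have "(\<integral>y. L - ?\<phi> (l y) \<partial>N) = L - (\<integral>y. ?\<phi> (l y) \<partial>N)" if "prob_space N" "integrable N (\<lambda>y. ?\<phi> (l y))" for N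
  proof -
    interpret prob_space N by (rule that(1))
    show ?thesis using that(2) by (simp add: Bochner_Integration.integral_diff prob_space)
  qed
  ultimately show ?thesis using ig ib Ng(1) Nb(1) by simp
qed

lemma dom_sq:
  assumes L: "L \<ge> 0"
  shows "(\<integral>y. (min (l y) L)\<^sup>2 \<partial>Ng) \<le> L\<^sup>2 + (\<integral>y. (l y)\<^sup>2 \<partial>Nb)"
proof -
  interpret G: prob_space Ng by (rule Ng(1))
  let ?\<phi> = "\<lambda>z. (max (- z) 0)\<^sup>2"
  have b: "\<bar>?\<phi> z\<bar> \<le> 0 + z\<^sup>2" for z :: real by (auto simp: max_def)
  have ig: "integrable Ng (\<lambda>y. ?\<phi> (l y))" by (rule int_bound[OF Ng(1) lmg ig2 _ b]) measurable
  have ib: "integrable Nb (\<lambda>y. ?\<phi> (l y))" by (rule int_bound[OF Nb(1) lmb ib2 _ b]) measurable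
  have b2: "\<bar>(min z L)\<^sup>2\<bar> \<le> L\<^sup>2 + z\<^sup>2" for z :: real
    using L by (auto simp: min_def)
  have igm: "integrable Ng (\<lambda>y. (min (l y) L)\<^sup>2)" by (rule int_bound[OF Ng(1) lmg ig2 _ b2]) measurable
  have "(\<integral>y. ?\<phi> (l y) \<partial>Ng) \<le> (\<integral>y. ?\<phi> (l y) \<partial>Nb)"
  proof (rule dom_nn[OF _ _ _ ig ib])
    fix t :: real assume t: "t \<ge> 0"
    have "t < ?\<phi> z \<longleftrightarrow> z < - sqrt t" for z
    proof
      assume "t < ?\<phi> z"
      then have "sqrt t < sqrt (?\<phi> z)" by (simp only: real_sqrt_less_iff)
      then have "sqrt t < \<bar>max (- z) 0\<bar>" by (simp only: real_sqrt_abs)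
      then have "sqrt t < max (- z) 0" by simp
      then show "z < - sqrt t" using t by (auto simp: max_def split: if_splits)
    next
      assume z: "z < - sqrt t"
      then have "sqrt t < max (- z) 0" by auto
      then have "(sqrt t)\<^sup>2 < (max (- z) 0)\<^sup>2" using t by (intro power_strict_mono) auto
      then show "t < ?\<phi> z" using t by simp
    qed
    then have "{y. t < ?\<phi> (l y)} = {y. l y < - sqrt t}" by blast
    then show "\<exists>s. {y. t < ?\<phi> (l y)} = {y. l y < s}" by blast
  qed auto
  also have "\<dots> \<le> (\<integral>y. (l y)\<^sup>2 \<partial>Nb)"
    by (intro integral_mono ib ib2) (auto simp: max_def)
  finally have 1: "(\<integral>y. ?\<phi> (l y) \<partial>Ng) \<le> (\<integral>y. (l y)\<^sup>2 \<partial>Nb)" .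
  have "(\<integral>y. (min (l y) L)\<^sup>2 \<partial>Ng) \<le> (\<integral>y. L\<^sup>2 + ?\<phi> (l y) \<partial>Ng)"
  proof (intro integral_mono igm)
    show "integrable Ng (\<lambda>y. L\<^sup>2 + ?\<phi> (l y))" using ig G.integrable_const[of "L\<^sup>2"] by (intro Bochner_Integration.integrable_add)
    fix y
    show "(min (l y) L)\<^sup>2 \<le> L\<^sup>2 + ?\<phi> (l y)"
    proof (cases "l y \<ge> 0")
      case True
      then have "(min (l y) L)\<^sup>2 \<le> L\<^sup>2" using L by (intro power_mono) auto
      moreover have "(max (- l y) 0)\<^sup>2 \<ge> 0" by simp
      ultimately show ?thesis by linarith
    next
      case False
      then show ?thesis using L by (simp add: min_def max_def power2_eq_square)
    qed
  qed
  also have "\<dots> = L\<^sup>2 + (\<integral>y. ?\<phi> (l y) \<partial>Ng)"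
    using ig G.integrable_const[of "L\<^sup>2"] by (simp add: Bochner_Integration.integral_add G.prob_space)
  finally show ?thesis using 1 by simp
qed

lemma cheb:
  assumes d: "d > 0"
  shows "measure Ng {y. l y < - d} \<le> (\<integral>y. (l y)\<^sup>2 \<partial>Nb) / d\<^sup>2"
proof -
  interpret Bb: prob_space Nb by (rule Nb(1))
  have sb: "{y. l y < - d} \<in> sets Nb" using lsets Nb(2) by auto
  have "measure Nb {y. l y < - d} = (\<integral>y. indicator {y. l y < - d} y \<partial>Nb)" using sb by simp
  also have "\<dots> \<le> (\<integral>y. (l y)\<^sup>2 / d\<^sup>2 \<partial>Nb)"
  proof (intro integral_mono)
    show "integrable Nb (indicator {y. l y < - d} :: real \<Rightarrow> real)"
      using sb Bb.emeasure_finite[of "{y. l y < - d}"] by (intro integrable_real_indicator) (auto simp: less_top[symmetric])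
    show "integrable Nb (\<lambda>y. (l y)\<^sup>2 / d\<^sup>2)" using ib2 by simp
    fix y
    show "indicator {y. l y < - d} y \<le> (l y)\<^sup>2 / d\<^sup>2"
    proof (cases "l y < - d")
      case True
      then have "d\<^sup>2 \<le> (- l y)\<^sup>2" using d by (intro power_mono) auto
      then have "d\<^sup>2 \<le> (l y)\<^sup>2" by simp
      then show ?thesis using True d by (simp add: indicator_def le_divide_eq)
    next
      case False then show ?thesis by (simp add: indicator_def)
    qed
  qed
  also have "\<dots> = (\<integral>y. (l y)\<^sup>2 \<partial>Nb) / d\<^sup>2" by simp
  finally show ?thesis using dom_lt_measure[of "- d"] by simp
qed

end

lemma int_bound':
  fixes N :: "real measure" and l \<psi> :: "real \<Rightarrow> real"
  assumes "prob_space N" "l \<in> borel_measurable N" "integrable N (\<lambda>x. (l x)\<^sup>2)"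
    and "\<psi> \<in> borel_measurable borel" "\<And>z. \<bar>\<psi> z\<bar> \<le> K + z\<^sup>2"
  shows "integrable N (\<lambda>y. \<psi> (l y))"
proof -
  interpret prob_space N by fact
  show ?thesis
  proof (rule Bochner_Integration.integrable_bound[where f="\<lambda>y. K + (l y)\<^sup>2"])
    show "integrable N (\<lambda>y. K + (l y)\<^sup>2)" using assms by auto
    show "(\<lambda>y. \<psi> (l y)) \<in> borel_measurable N" using assms by measurable
    show "AE x in N. norm (\<psi> (l x)) \<le> norm (K + (l x)\<^sup>2)"
      using assms(5) by (intro AE_I2) (smt (verit, best) real_norm_def)
  qed
qed

lemma min_lower:
  fixes N :: "real measure" and l :: "real \<Rightarrow> real"
  assumes N: "prob_space N" and lm: "l \<in> borel_measurable N" and i1: "integrable N l"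
    and i2: "integrable N (\<lambda>x. (l x)\<^sup>2)" and L: "L > 0"
  shows "(\<integral>y. l y \<partial>N) - (\<integral>y. (l y)\<^sup>2 \<partial>N) / L \<le> (\<integral>y. min (l y) L \<partial>N)"
proof -
  interpret prob_space N by (rule N)
  have im: "integrable N (\<lambda>y. min (l y) L)"
    by (rule Bochner_Integration.integrable_bound[OF Bochner_Integration.integrable_add[OF integrable_abs[OF i1] integrable_const[of L]]])
       (use lm L in \<open>auto intro!: AE_I2 simp: min_def\<close>)
  have "(\<integral>y. l y - (l y)\<^sup>2 / L \<partial>N) \<le> (\<integral>y. min (l y) L \<partial>N)"
  proof (intro integral_mono im)
    show "integrable N (\<lambda>y. l y - (l y)\<^sup>2 / L)" using i1 i2 by auto
    fix y
    show "l y - (l y)\<^sup>2 / L \<le> min (l y) L"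
    proof (cases "l y \<le> L")
      case True
      have "(l y)\<^sup>2 / L \<ge> 0" using L by simp
      then show ?thesis using True by simp
    next
      case False
      then have "l y / L \<ge> 1" using L by simp
      then have "l y * (l y / L) \<ge> l y * 1" using False L by (intro mult_left_mono) auto
      then have "(l y)\<^sup>2 / L \<ge> l y" by (simp add: power2_eq_square)
      then show ?thesis using False L by simp
    qed
  qed
  moreover have "(\<integral>y. l y - (l y)\<^sup>2 / L \<partial>N) = (\<integral>y. l y \<partial>N) - (\<integral>y. (l y)\<^sup>2 \<partial>N) / L"
    using i1 i2 by simp
  ultimately show ?thesis by simp
qed

lemma rho_ok_gen:
  fixes Ng :: "real measure" and l :: "real \<Rightarrow> real"
  assumes Ng: "prob_space Ng" "sets Ng = sets borel" and lm: "l \<in> borel_measurable borel"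
    and ig2: "integrable Ng (\<lambda>x. (l x)\<^sup>2)"
    and pars: "a > 0" "gam \<ge> 0" "B > 0" "C \<ge> 0" "L \<ge> 0" "d \<ge> 0"
    and mlow: "m \<le> (\<integral>y. min (l y) L \<partial>Ng)" "m \<ge> 0"
    and Sb: "(\<integral>y. (min (l y) L)\<^sup>2 \<partial>Ng) \<le> S"
    and tail: "\<And>d. d > 0 \<Longrightarrow> measure Ng {y. l y < - d} \<le> V / d\<^sup>2" and V: "V \<ge> 0"
    and c1: "m / a + gam * B * m - gam * S - C \<ge> 1"
    and c2: "m / a - gam * S - C * (4 * V / B\<^sup>2) \<ge> 1"
  shows "(\<integral>y. rho a gam B C L l d y \<partial>Ng) \<ge> phat a gam B d + 1"
proof -
  interpret G: prob_space Ng by (rule Ng(1))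
  have spNg: "space Ng = UNIV" using sets_eq_imp_space_eq[OF Ng(2)] by simp
  have lmg: "l \<in> borel_measurable Ng" using lm Ng(2) measurable_cong_sets by blast
  have b1: "\<bar>min z L\<bar> \<le> (L + 1) + z\<^sup>2" for z :: real
  proof -
    have "0 \<le> (\<bar>z\<bar> - 1)\<^sup>2" by simp
    then have "2 * \<bar>z\<bar> \<le> z\<^sup>2 + 1" by (simp add: power2_diff)
    then have "\<bar>z\<bar> \<le> 1 + z\<^sup>2" by (smt (verit) zero_le_power2)
    then show ?thesis using pars by (auto simp: abs_le_iff min_def)
  qed
  have b2: "\<bar>(min z L)\<^sup>2\<bar> \<le> L\<^sup>2 + z\<^sup>2" for z :: real
    using pars by (auto simp: min_def)
  have i1: "integrable Ng (\<lambda>y. min (l y) L)" by (rule int_bound'[OF Ng(1) lmg ig2 _ b1]) measurable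
  have i2: "integrable Ng (\<lambda>y. (min (l y) L)\<^sup>2)" by (rule int_bound'[OF Ng(1) lmg ig2 _ b2]) measurable
  have R: "(\<integral>y. rho a gam B C L l d y \<partial>Ng) \<ge>
     phat a gam B d + (1 / a + 2 * gam * max (B - d) 0) * m - gam * S - C * measure Ng {y \<in> space Ng. l y < - d}"
    by (rule rho_int[OF Ng(1) lmg i1 i2 pars(1,2) _ pars(4,5,6) mlow(1) Sb]) (use pars in auto)
  have set: "{y \<in> space Ng. l y < - d} = {y. l y < - d}" by (simp add: spNg)
  have gm: "gam * m \<ge> 0" using pars mlow by simp
  show ?thesis
  proof (cases "d \<le> B / 2")
    case True
    have "B \<le> 2 * max (B - d) 0" using True pars by auto
    then have "gam * m * B \<le> gam * m * (2 * max (B - d) 0)"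
      using gm by (rule mult_left_mono)
    then have "gam * B * m \<le> 2 * gam * max (B - d) 0 * m"
      by (simp add: algebra_simps)
    then have "(1 / a + 2 * gam * max (B - d) 0) * m \<ge> m / a + gam * B * m"
      by (simp add: distrib_right)
    moreover have "C * measure Ng {y. l y < - d} \<le> C" using pars(4) by (simp add: mult_left_le)
    ultimately show ?thesis using R[unfolded set] c1 by linarith
  next
    case False
    then have d0: "d > 0" using pars by simp
    have "(1 / a + 2 * gam * max (B - d) 0) * m \<ge> m / a"
      using pars mlow by (simp add: distrib_right)
    moreover have "measure Ng {y. l y < - d} \<le> 4 * V / B\<^sup>2"
    proof -
      have "(B / 2)\<^sup>2 \<le> d\<^sup>2" using False pars by (intro power_mono) auto
      then have "B\<^sup>2 / 4 \<le> d\<^sup>2" by (simp add: power_divide)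
      then have "V / d\<^sup>2 \<le> V / (B\<^sup>2 / 4)" using V pars d0 by (intro divide_left_mono) auto
      then show ?thesis using tail[OF d0] by (simp add: mult.commute)
    qed
    then have "C * measure Ng {y. l y < - d} \<le> C * (4 * V / B\<^sup>2)" by (rule mult_left_mono) (rule pars(4))
    ultimately show ?thesis using R[unfolded set] c2 by linarith
  qed
qed

lemma final_arith:
  fixes \<epsilon> KL V h mu :: real
  assumes e: "\<epsilon> > 0" and KL: "KL > 0" and V: "V \<ge> 0" and mu: "mu > 0" and h: "h \<ge> 0"
  defines "\<delta> \<equiv> \<epsilon> / 4"
  defines "L \<equiv> 4 * V * (1 + \<epsilon> / 2) / (KL * \<epsilon>) + 1"
  defines "m \<equiv> KL - V / L"
  defines "a \<equiv> m / (1 + \<delta>)"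
  defines "S \<equiv> L\<^sup>2 + V"
  defines "C \<equiv> 1 + h / mu"
  defines "gam \<equiv> \<delta> / (2 * S)"
  defines "B \<equiv> (S + C / gam) / m + 8 * V * C / \<delta> + 1"
  shows "L > 0" "m > 0" "a > 0" "S > 0" "gam > 0" "B > 0" "C \<ge> 0"
    and "m \<le> KL - V / L"
    and "m / a + gam * B * m - gam * S - C \<ge> 1"
    and "m / a - gam * S - C * (4 * V / B\<^sup>2) \<ge> 1"
    and "\<forall>A \<ge> (2 / \<epsilon>) * ((1 + \<epsilon> / 2) * L + KL * (gam * B\<^sup>2 + C)) + 1.
           (A + L) / a + gam * B\<^sup>2 + C \<le> A / KL * (1 + \<epsilon>)"
proof -
  have d0: "\<delta> > 0" using e by (simp add: \<delta>_def)
  have L1: "L \<ge> 1" using V e KL by (simp add: L_def)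
  then show L0: "L > 0" by simp
  have "KL * \<epsilon> * L \<ge> 4 * V * (1 + \<epsilon> / 2)"
  proof -
    have "KL * \<epsilon> * L = 4 * V * (1 + \<epsilon> / 2) + KL * \<epsilon>" using KL e by (simp add: L_def field_simps)
    then show ?thesis using KL e by simp
  qed
  then have VL: "V / L \<le> KL * \<epsilon> / (4 * (1 + \<epsilon> / 2))"
    using L0 e KL by (simp add: field_simps)
  have meq: "KL - KL * \<epsilon> / (4 * (1 + \<epsilon> / 2)) = KL * (1 + \<delta>) / (1 + \<epsilon> / 2)"
    using e by (simp add: \<delta>_def field_simps)
  have mge: "m \<ge> KL * (1 + \<delta>) / (1 + \<epsilon> / 2)" using VL meq by (simp add: m_def)
  have "KL * (1 + \<delta>) / (1 + \<epsilon> / 2) > 0" using KL d0 e by (intro divide_pos_pos mult_pos_pos) auto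
  then show m0: "m > 0" using mge by linarith
  show a0: "a > 0" using m0 d0 by (simp add: a_def)
  have "L\<^sup>2 > 0" using L0 by simp
  then show S0: "S > 0" using V unfolding S_def by linarith
  show g0: "gam > 0" using d0 S0 by (simp add: gam_def)
  have C0: "C \<ge> 0" using h mu by (simp add: C_def)
  then show "C \<ge> 0" .
  have B1: "B \<ge> 1" using S0 g0 m0 C0 V d0 by (simp add: B_def)
  then show "B > 0" by simp
  show "m \<le> KL - V / L" by (simp add: m_def)
  have ma: "m / a = 1 + \<delta>" using m0 d0 by (simp add: a_def)
  have gS: "gam * S = \<delta> / 2" using S0 by (simp add: gam_def)
  have mB: "m * B \<ge> S + C / gam"
  proof -
    have "m * B = (S + C / gam) + m * (8 * V * C / \<delta> + 1)" using m0 by (simp add: B_def field_simps)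
    moreover have "m * (8 * V * C / \<delta> + 1) \<ge> 0" using m0 V C0 d0 by simp
    ultimately show ?thesis by simp
  qed
  then have "gam * (m * B) \<ge> gam * S + C" using g0 by (simp add: field_simps)
  then show "m / a + gam * B * m - gam * S - C \<ge> 1" using ma d0 by (simp add: algebra_simps)
  have "B\<^sup>2 \<ge> B" using B1 by (simp add: power2_eq_square)
  moreover have "B \<ge> 8 * V * C / \<delta>"
  proof -
    have "(S + C / gam) / m \<ge> 0" using S0 g0 m0 C0 by simp
    then show ?thesis unfolding B_def by linarith
  qed
  ultimately have "\<delta> * B\<^sup>2 \<ge> 8 * V * C"
  proof -
    assume b2: "B\<^sup>2 \<ge> B" and b8: "B \<ge> 8 * V * C / \<delta>"
    have "8 * V * C \<le> \<delta> * B" using b8 d0 by (simp add: field_simps)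
    also have "\<dots> \<le> \<delta> * B\<^sup>2" using b2 d0 by simp
    finally show ?thesis .
  qed
  then have "C * (4 * V / B\<^sup>2) \<le> \<delta> / 2" using B1 by (simp add: field_simps)
  then show "m / a - gam * S - C * (4 * V / B\<^sup>2) \<ge> 1" using ma gS by simp
  show "\<forall>A \<ge> (2 / \<epsilon>) * ((1 + \<epsilon> / 2) * L + KL * (gam * B\<^sup>2 + C)) + 1.
           (A + L) / a + gam * B\<^sup>2 + C \<le> A / KL * (1 + \<epsilon>)"
  proof (intro allI impI)
    fix A assume A: "A \<ge> (2 / \<epsilon>) * ((1 + \<epsilon> / 2) * L + KL * (gam * B\<^sup>2 + C)) + 1"
    have K0: "gam * B\<^sup>2 + C \<ge> 0" using g0 C0 by simp
    have Apos: "A > 0" using A e L0 KL K0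
      by (smt (verit) divide_pos_pos mult_nonneg_nonneg)
    have inv: "1 / a \<le> (1 + \<epsilon> / 2) / KL"
    proof -
      have "1 / a = (1 + \<delta>) / m" using m0 d0 by (simp add: a_def)
      also have "\<dots> \<le> (1 + \<delta>) / (KL * (1 + \<delta>) / (1 + \<epsilon> / 2))"
        using mge m0 d0 KL e by (intro divide_left_mono) auto
      also have "\<dots> = (1 + \<delta>) * (1 + \<epsilon> / 2) / (KL * (1 + \<delta>))" by simp
      also have "\<dots> = (1 + \<epsilon> / 2) / KL"
        using d0 KL by (metis (no_types, lifting) add_pos_pos less_numeral_extra(1) mult.commute
            nonzero_mult_divide_mult_cancel_left order_less_irrefl)
      finally show ?thesis .
    qed
    have dummy: True by simp
    have inv2: "1 / a \<le> (1 + \<epsilon> / 2) / KL" using inv .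
    have "(A + L) / a = (A + L) * (1 / a)" by simp
    also have "\<dots> \<le> (A + L) * ((1 + \<epsilon> / 2) / KL)" using inv Apos L0 by (intro mult_left_mono) auto
    finally have 1: "(A + L) / a \<le> (A + L) * (1 + \<epsilon> / 2) / KL" by simp
    have "A * \<epsilon> / 2 \<ge> (1 + \<epsilon> / 2) * L + KL * (gam * B\<^sup>2 + C)"
    proof -
      have "A * \<epsilon> / 2 \<ge> ((2 / \<epsilon>) * ((1 + \<epsilon> / 2) * L + KL * (gam * B\<^sup>2 + C)) + 1) * \<epsilon> / 2"
        using A e by (intro divide_right_mono mult_right_mono) auto
      also have "((2 / \<epsilon>) * ((1 + \<epsilon> / 2) * L + KL * (gam * B\<^sup>2 + C)) + 1) * \<epsilon> / 2
          = ((1 + \<epsilon> / 2) * L + KL * (gam * B\<^sup>2 + C)) + \<epsilon> / 2" using e by (simp add: field_simps)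
      finally show ?thesis using e by simp
    qed
    moreover have aux: "\<And>A L e X::real. (1 + e / 2) * L + X \<le> A * e / 2 \<Longrightarrow> (A + L) * (1 + e / 2) + X \<le> A * (1 + e)"
    proof -
      fix A L e X :: real assume hh: "(1 + e / 2) * L + X \<le> A * e / 2"
      have e1: "(A + L) * (1 + e / 2) = A + L + (A * e) / 2 + (L * e) / 2" by (simp add: algebra_simps)
      have e2: "(1 + e / 2) * L = L + (L * e) / 2" by (simp add: algebra_simps)
      have e3: "A * (1 + e) = A + A * e" by (simp add: algebra_simps)
      show "(A + L) * (1 + e / 2) + X \<le> A * (1 + e)" unfolding e1 e3 using hh[unfolded e2] by linarith
    qed
    ultimately have num: "(A + L) * (1 + \<epsilon> / 2) + KL * (gam * B\<^sup>2 + C) \<le> A * (1 + \<epsilon>)"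
      by blast
    have 2: "(A + L) * (1 + \<epsilon> / 2) / KL + gam * B\<^sup>2 + C \<le> A / KL * (1 + \<epsilon>)"
    proof -
      have "(A + L) * (1 + \<epsilon> / 2) / KL + gam * B\<^sup>2 + C = ((A + L) * (1 + \<epsilon> / 2) + KL * (gam * B\<^sup>2 + C)) / KL"
        using KL by (simp add: add_divide_distrib)
      also have "\<dots> \<le> (A * (1 + \<epsilon>)) / KL" using num KL by (intro divide_right_mono) auto
      finally show ?thesis by simp
    qed
    show "(A + L) / a + gam * B\<^sup>2 + C \<le> A / KL * (1 + \<epsilon>)" using 1 2 by simp
  qed
qed

theorem theorem3:
  fixes f gb :: "real \<Rightarrow> real" and \<G> :: "(real \<Rightarrow> real) set" and mu h :: real
  assumes f_dens: "is_density f"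
    and G_dens: "\<forall>g\<in>\<G>. is_density g"
    and gb_in: "gb \<in> \<G>"
    and f_pos: "AE x in lborel. 0 < f x"
    and gb_pos: "AE x in lborel. 0 < gb x"
    and least_fav: "\<forall>g\<in>\<G>. \<forall>t::real.
        measure (law g) {x. llr gb f x \<ge> t} \<ge> measure (law gb) {x. llr gb f x \<ge> t}"
    and cont_f: "\<forall>t::real. measure (law f) {x. llr gb f x = t} = 0"
    and cont_G: "\<forall>g\<in>\<G>. \<forall>t::real. measure (law g) {x. llr gb f x = t} = 0"
    and mom_f: "integrable (law f) (\<lambda>x. (llr gb f x)\<^sup>2)"
    and mom_G: "\<forall>g\<in>\<G>. integrable (law g) (\<lambda>x. (llr gb f x)\<^sup>2)"
    and KL_pos: "(\<integral>x. llr gb f x \<partial>law gb) > 0"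
    and mu_pos: "mu > 0"
    and h_nonneg: "h \<ge> 0"
  shows "\<forall>\<epsilon>>0. \<forall>\<^sub>F A in at_top.
           (SUP g\<in>\<G>. WADD_rdc f gb g A mu h)
             \<le> ennreal (A / (\<integral>x. llr gb f x \<partial>law gb) * (1 + \<epsilon>))"
proof (intro allI impI)
  fix \<epsilon> :: real assume e: "\<epsilon> > 0"
  define l where "l = llr gb f"
  define KL where "KL = (\<integral>x. llr gb f x \<partial>law gb)"
  define V where "V = (\<integral>x. (llr gb f x)\<^sup>2 \<partial>law gb)"
  define \<delta> where "\<delta> = \<epsilon> / 4"
  define L where "L = 4 * V * (1 + \<epsilon> / 2) / (KL * \<epsilon>) + 1"
  define m where "m = KL - V / L"
  define a where "a = m / (1 + \<delta>)"
  define S where "S = L\<^sup>2 + V"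
  define C where "C = 1 + h / mu"
  define gam where "gam = \<delta> / (2 * S)"
  define B where "B = (S + C / gam) / m + 8 * V * C / \<delta> + 1"
  have KL0: "KL > 0" using KL_pos by (simp add: KL_def)
  have V0: "V \<ge> 0" unfolding V_def by (intro integral_nonneg_AE) auto
  note fa = final_arith[OF e KL0 V0 mu_pos h_nonneg, folded \<delta>_def, folded L_def, folded m_def,
      folded a_def, folded S_def, folded C_def, folded gam_def, folded B_def]
  have L0: "L > 0" and m0: "m > 0" and a0: "a > 0" and S0: "S > 0" and g0: "gam > 0" and B0: "B > 0"
    and C0: "C \<ge> 0" using fa by auto
  have c1: "m / a + gam * B * m - gam * S - C \<ge> 1" and c2: "m / a - gam * S - C * (4 * V / B\<^sup>2) \<ge> 1"
    using fa by auto
  have fmeas: "f \<in> borel_measurable borel" using f_dens by (simp add: is_density_def)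
  have gbmeas: "gb \<in> borel_measurable borel" using G_dens gb_in by (simp add: is_density_def)
  have lm: "llr gb f \<in> borel_measurable borel" by (rule llr_meas[OF fmeas gbmeas])
  have pf: "prob_space (law f)" by (rule law_prob[OF f_dens])
  have pb: "prob_space (law gb)" using law_prob G_dens gb_in by blast
  have ib2: "integrable (law gb) (\<lambda>x. (llr gb f x)\<^sup>2)" using mom_G gb_in by blast
  have mb: "m \<le> (\<integral>y. min (llr gb f y) L \<partial>law gb)"
  proof -
    have "llr gb f \<in> borel_measurable (law gb)" using lm by (simp add: law_def)
    moreover have "integrable (law gb) (llr gb f)"
    proof -
      interpret prob_space "law gb" by (rule pb)
      show ?thesis by (rule square_integrable_imp_integrable[OF \<open>llr gb f \<in> borel_measurable (law gb)\<close> ib2])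
    qed
    ultimately have "KL - V / L \<le> (\<integral>y. min (llr gb f y) L \<partial>law gb)"
      using min_lower[OF pb _ _ ib2 L0] by (simp add: KL_def V_def)
    then show ?thesis by (simp add: m_def)
  qed
  show "\<forall>\<^sub>F A in at_top. (SUP g\<in>\<G>. WADD_rdc f gb g A mu h)
             \<le> ennreal (A / (\<integral>x. llr gb f x \<partial>law gb) * (1 + \<epsilon>))"
    unfolding eventually_at_top_linorder
  proof (intro exI allI impI)
    fix A assume A: "A \<ge> (2 / \<epsilon>) * ((1 + \<epsilon> / 2) * L + KL * (gam * B\<^sup>2 + C)) + 1"
    have cA: "(A + L) / a + gam * B\<^sup>2 + C \<le> A / KL * (1 + \<epsilon>)" using fa A by blast
    have Apos: "A > 0"
    proof -
      have "(2 / \<epsilon>) * ((1 + \<epsilon> / 2) * L + KL * (gam * B\<^sup>2 + C)) \<ge> 0"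
        using e L0 KL0 g0 C0 by (intro mult_nonneg_nonneg add_nonneg_nonneg) auto
      then show ?thesis using A by linarith
    qed
    let ?c = "(A + L) / a + gam * B\<^sup>2 + C"
    have c0: "?c \<ge> 0" using Apos L0 a0 g0 C0 by simp
    have per: "esssup (Pk f g k) (nn_cond_exp (Pk f g k) (info_alg (Pk f g k) gb f mu h (k - 1))
            (\<lambda>x. delay (rdc_tau gb f A mu h x) k)) \<le> ennreal ?c"
      if g: "g \<in> \<G>" and k: "k \<ge> 1" for g k
    proof -
      have pg: "prob_space (law g)" using law_prob G_dens g by blast
      have ig2: "integrable (law g) (\<lambda>x. (llr gb f x)\<^sup>2)" using mom_G g by blast
      have dom: "\<And>t. measure (law gb) {x. llr gb f x \<ge> t} \<le> measure (law g) {x. llr gb f x \<ge> t}"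
        using least_fav g by blast
      note D = pg sets_law[of g] pb sets_law[of gb] lm ig2 ib2 dom
      have mg: "m \<le> (\<integral>y. min (llr gb f y) L \<partial>law g)"
        using mb dom_min[OF D, of L] L0 by linarith
      have Sg: "(\<integral>y. (min (llr gb f y) L)\<^sup>2 \<partial>law g) \<le> S"
        using dom_sq[OF D, of L] L0 by (simp add: S_def V_def)
      have tail: "\<And>d. d > 0 \<Longrightarrow> measure (law g) {y. llr gb f y < - d} \<le> V / d\<^sup>2"
        using cheb[OF D] by (simp add: V_def)
      have rho_ok: "(\<integral>y. rho a gam B (1 + h / mu) L (llr gb f) d y \<partial>law g) \<ge> phat a gam B d + 1"
        if "0 \<le> d" "d < A" for d
        using rho_ok_gen[OF pg sets_law lm ig2 a0 _ B0 _ _ that(1) mg _ Sg tail V0 c1[unfolded C_def] c2[unfolded C_def]]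
          g0 C0 L0 m0 by (simp add: C_def)
      show ?thesis
      proof (rule esssup_k_bound[OF k pf pg c0 _ lm])
        fix E N
        assume EP: "E \<in> sets (Pk f g k)" and Eloc: "\<And>x x'. (\<forall>i<k - 1. x i = x' i) \<Longrightarrow> x \<in> E \<longleftrightarrow> x' \<in> E"
        define M where "M i = (if i + 1 < k then law f else law g)" for i
        have P: "Pk f g k = PiM UNIV M" unfolding Pk_def M_def by (rule refl)
        interpret ds: drift_setup M gb f mu h A a gam B L "k - 1" "law g" E
        proof (rule drift_setup.intro)
          show "prob_space (M i)" for i using pf pg by (simp add: M_def)
          show "sets (M i) = sets borel" for i by (simp add: M_def sets_law)
          show "M i = law g" if "k - 1 \<le> i" for i
          proof -
            have "\<not> (i + 1 < k)" using that k by arith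
            then show ?thesis by (simp add: M_def)
          qed
          show "E \<in> sets (PiM UNIV M)" using EP P by simp
          show "llr gb f \<in> borel_measurable borel" by (rule lm)
          show "a > 0" "gam \<ge> 0" "B \<ge> 0" "L \<ge> 0" "mu > 0" "h \<ge> 0" "A > 0"
            using a0 g0 B0 L0 mu_pos h_nonneg Apos by auto
          show "\<And>d. 0 \<le> d \<Longrightarrow> d < A \<Longrightarrow>
              (\<integral>y. rho a gam B (1 + h / mu) L (llr gb f) d y \<partial>law g) \<ge> phat a gam B d + 1"
            by (rule rho_ok)
          show "\<And>x x'. (\<forall>i<k - 1. x i = x' i) \<Longrightarrow> x \<in> E \<longleftrightarrow> x' \<in> E" by (rule Eloc)
        qed

        show "(\<Sum>n\<in>{k - 1..<N}. measure (Pk f g k) (E \<inter> alive gb f A mu h n)) \<le> ?c * measure (Pk f g k) E"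
          using ds.key_sum[of N] P by (simp add: C_def)
      qed
    qed
    have "(SUP g\<in>\<G>. WADD_rdc f gb g A mu h) \<le> ennreal ?c"
      unfolding WADD_rdc_def by (intro SUP_least per) auto
    also have "\<dots> \<le> ennreal (A / (\<integral>x. llr gb f x \<partial>law gb) * (1 + \<epsilon>))"
      using cA by (intro ennreal_leI) (simp add: KL_def)
    finally show "(SUP g\<in>\<G>. WADD_rdc f gb g A mu h) \<le> ennreal (A / (\<integral>x. llr gb f x \<partial>law gb) * (1 + \<epsilon>))" .
  qed
qed

end
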